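(* Let $\mathcal{Z}$ be a set and $\{W^z\}_{z\in\mathcal{Z}}$ a family of $d\times d$ positive semidefinite matrices with $\|W^z\|_F\le1$ for all $z$. Let $C\in(1,2]$ and $\gamma\in(0,1)$ with $\gamma C<5/2$. Suppose the subroutines $\mathtt{LinOpt}$ and $\mathtt{LinEst}$ satisfy the approximation assumption below with $\varepsilon_{\mathrm{LinOpt}}=C\gamma/5$ and $\varepsilon_{\mathrm{LinEst}}=C\gamma^2/10$, for some subsets $\mathcal{Z}_{\mathrm{ref}},\mathcal{Z}_{\mathrm{supp}}\subseteq\mathcal{Z}$. Then FW-OptDesign run with parameters $C,\gamma$ terminates after at most $t\le\lceil 16\gamma^{-2}C^{-2}d^{-1}\ln(1+1/\gamma)\rceil$ iterations (using at most twice that many calls to each of $\mathtt{LinOpt}$ and $\mathtt{LinEst}$), and its output $P_t$ satisfies $P_t\in\Delta(\mathcal{Z}_{\mathrm{supp}})$, $|\mathrm{supp}(P_t)|\le t$, and $$\sup_{z\in\mathcal{Z}_{\mathrm{ref}}}\mathrm{Tr}(M_{P_t}^{-1}W^z)\le(1+3C/2)\,d,\qquad M_{P_t}:=\gamma I_d+\mathbb{E}_{z\sim P_t}[W^z].$$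
   Context: Approximation assumption: $\mathtt{LinOpt}$ maps $d\times d$ matrices to elements of $\mathcal{Z}_{\mathrm{supp}}$, and $\mathtt{LinEst}$ maps finitely supported distributions on $\mathcal{Z}_{\mathrm{supp}}$ to $d\times d$ positive semidefinite matrices, such that for every nonzero positive semidefinite $M$ and every finitely supported $P\in\Delta(\mathcal{Z}_{\mathrm{supp}})$, the outputs $\hat z_M=\mathtt{LinOpt}(M/\|M\|_F)$ and $\widehat W_P=\mathtt{LinEst}(P)$ satisfy $\sup_{z\in\mathcal{Z}_{\mathrm{ref}}}\mathrm{Tr}(MW^z)\le\mathrm{Tr}(MW^{\hat z_M})+\varepsilon_{\mathrm{LinOpt}}\|M\|_F$ and $\|\widehat W_P-\mathbb{E}_{z\sim P}[W^z]\|_{\mathrm{op}}\le\varepsilon_{\mathrm{LinEst}}$. Algorithm FW-OptDesign($\mathtt{LinOpt},\mathtt{LinEst},C,\gamma$): set $\mu=C\gamma^2d/8$, $z_1=\mathtt{LinOpt}(I_d)$, $P_1=\delta_{z_1}$ (point mass). For $t=1,2,\dots$: set $M_t=\gamma I_d+\mathtt{LinEst}(P_t)$; set $\tilde z_t=\mathtt{LinOpt}(M_t^{-1}/\|M_t^{-1}\|_F)$; set $W_t=\mathtt{LinEst}(\delta_{\tilde z_t})$; if $\mathrm{Tr}(M_t^{-1}W_t)\le(1+C)d$, return $P_t$; otherwise set $P_{t+1}=P_t+\mu(\delta_{\tilde z_t}-P_t)$ (i.e. $(1-\mu)P_t+\mu\delta_{\tilde z_t}$) and continue. $\|\cdot\|_F$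 and $\|\cdot\|_{\mathrm{op}}$ denote Frobenius and operator norms. *)

theory Defs
  imports "HOL-Analysis.Analysis"
begin

text \<open>d x d real matrices are modelled as real^'n^'n with d = CARD('n).
  The norm on real^'n^'n is the Frobenius norm; the operator norm is the
  onorm of the induced linear map.\<close>

definition psd :: "real^'n^'n \<Rightarrow> bool" where
  "psd A \<longleftrightarrow> transpose A = A \<and> (\<forall>x. 0 \<le> x \<bullet> (A *v x))"

definition op_norm :: "real^'n^'n \<Rightarrow> real" where
  "op_norm A = onorm (\<lambda>x. A *v x)"

definition fsupp :: "('z \<Rightarrow> real) \<Rightarrow> 'z set" where
  "fsupp P = {z. P z \<noteq> 0}"

definition is_fdist :: "('z \<Rightarrow> real) \<Rightarrow> 'z set \<Rightarrow> bool" where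
  "is_fdist P S \<longleftrightarrow> finite (fsupp P) \<and> (\<forall>z. 0 \<le> P z) \<and> fsupp P \<subseteq> S
      \<and> sum P (fsupp P) = 1"

definition delta :: "'z \<Rightarrow> ('z \<Rightarrow> real)" where
  "delta z = (\<lambda>y. if y = z then 1 else 0)"

definition expW :: "('z \<Rightarrow> real^'n^'n) \<Rightarrow> ('z \<Rightarrow> real) \<Rightarrow> real^'n^'n" where
  "expW W P = (\<Sum>z\<in>fsupp P. P z *\<^sub>R W z)"

definition approx_assumption ::
  "('z \<Rightarrow> real^'n^'n) \<Rightarrow> (real^'n^'n \<Rightarrow> 'z) \<Rightarrow> (('z \<Rightarrow> real) \<Rightarrow> real^'n^'n)
   \<Rightarrow> 'z set \<Rightarrow> 'z set \<Rightarrow> real \<Rightarrow> real \<Rightarrow> bool" where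
  "approx_assumption W LinOpt LinEst Zref Zsupp epsOpt epsEst \<longleftrightarrow>
     (\<forall>M. LinOpt M \<in> Zsupp) \<and>
     (\<forall>P. is_fdist P Zsupp \<longrightarrow> psd (LinEst P)) \<and>
     (\<forall>M. psd M \<and> M \<noteq> 0 \<longrightarrow>
        (\<forall>z\<in>Zref. trace (M ** W z)
           \<le> trace (M ** W (LinOpt ((1 / norm M) *\<^sub>R M))) + epsOpt * norm M)) \<and>
     (\<forall>P. is_fdist P Zsupp \<longrightarrow> op_norm (LinEst P - expW W P) \<le> epsEst)"

text \<open>FW-OptDesign.  fw_M t = M_t, fw_zt t = tilde z_t, fw_stop t = stopping test
  at iteration t, fw_P t = P_t, for t \<ge> 1 (index 0 is a dummy equal to P_1).\<close>

definition fw_M :: "(('z \<Rightarrow> real) \<Rightarrow> real^'n^'n) \<Rightarrow> real \<Rightarrow> ('z \<Rightarrow> real) \<Rightarrow> real^'n^'n" where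
  "fw_M LinEst \<gamma> P = \<gamma> *\<^sub>R mat 1 + LinEst P"

definition fw_zt :: "(real^'n^'n \<Rightarrow> 'z) \<Rightarrow> (('z \<Rightarrow> real) \<Rightarrow> real^'n^'n) \<Rightarrow> real
    \<Rightarrow> ('z \<Rightarrow> real) \<Rightarrow> 'z" where
  "fw_zt LinOpt LinEst \<gamma> P =
     (let Mi = matrix_inv (fw_M LinEst \<gamma> P) in LinOpt ((1 / norm Mi) *\<^sub>R Mi))"

fun fw_P :: "(real^'n^'n \<Rightarrow> 'z) \<Rightarrow> (('z \<Rightarrow> real) \<Rightarrow> real^'n^'n) \<Rightarrow> real \<Rightarrow> real
    \<Rightarrow> nat \<Rightarrow> ('z \<Rightarrow> real)" where
  "fw_P LinOpt LinEst C \<gamma> 0 = delta (LinOpt (mat 1))"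
| "fw_P LinOpt LinEst C \<gamma> (Suc 0) = delta (LinOpt (mat 1))"
| "fw_P LinOpt LinEst C \<gamma> (Suc (Suc t)) =
     (let P = fw_P LinOpt LinEst C \<gamma> (Suc t);
          \<mu> = C * \<gamma>^2 * real CARD('n) / 8
      in (\<lambda>z. (1 - \<mu>) * P z + \<mu> * delta (fw_zt LinOpt LinEst \<gamma> P) z))"

definition fw_stop :: "(real^'n^'n \<Rightarrow> 'z) \<Rightarrow> (('z \<Rightarrow> real) \<Rightarrow> real^'n^'n) \<Rightarrow> real \<Rightarrow> real
    \<Rightarrow> nat \<Rightarrow> bool" where
  "fw_stop LinOpt LinEst C \<gamma> t =
     (let P = fw_P LinOpt LinEst C \<gamma> t;
          Wt = LinEst (delta (fw_zt LinOpt LinEst \<gamma> P))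
      in trace (matrix_inv (fw_M LinEst \<gamma> P) ** Wt) \<le> (1 + C) * real CARD('n))"

end

theory Submission
  imports Defs
begin

lemma symm_inner:
  fixes A :: "real^'n^'n"
  assumes "transpose A = A"
  shows "x \<bullet> (A *v y) = y \<bullet> (A *v x)"
proof -
  have "x \<bullet> (A *v y) = (x v* A) \<bullet> y" by (simp add: dot_lmul_matrix)
  also have "x v* A = transpose A *v x" by simp
  finally show ?thesis using assms by (simp add: inner_commute)
qed

lemma tQAQ_entry:
  fixes Q B :: "real^'n^'n"
  shows "(transpose Q ** B ** Q) $ i $ j = column i Q \<bullet> (B *v column j Q)"
  apply (simp add: matrix_matrix_mult_def matrix_vector_mult_def transpose_def column_def
      inner_vec_def sum_distrib_left sum_distrib_right)
  apply (subst sum.swap)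
  apply (simp add: mult_ac)
  done

lemma quad_bound_zero:
  fixes a K :: real
  assumes "\<forall>t. 2 * t * a \<le> t^2 * K"
  shows "a = 0"
proof (rule ccontr)
  assume "a \<noteq> 0"
  define s where "s = 1 / (\<bar>K\<bar> + 1)"
  have sp: "s > 0" by (simp add: s_def add_pos_nonneg)
  have sK: "s * K < 1"
  proof -
    have "s * K \<le> s * \<bar>K\<bar>" using sp by (simp add: mult_left_mono)
    also have "\<dots> < 1" by (simp add: s_def field_simps)
    finally show ?thesis .
  qed
  have "2 * (s*a) * a \<le> (s*a)^2 * K" using assms by blast
  hence "(s * a^2) * 2 \<le> (s * a^2) * (s * K)" by (simp add: power2_eq_square mult_ac)
  moreover have "s * a^2 > 0" using sp \<open>a \<noteq> 0\<close> by simp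
  ultimately have "2 \<le> s * K" by (metis mult_le_cancel_left_pos)
  with sK show False by simp
qed


lemma expand_quad:
  fixes A :: "real^'n^'n"
  assumes "transpose A = A"
  shows "(v + t *\<^sub>R w) \<bullet> (A *v (v + t *\<^sub>R w))
       = v \<bullet> (A *v v) + 2 * t * (w \<bullet> (A *v v)) + t^2 * (w \<bullet> (A *v w))"
proof -
  have "v \<bullet> (A *v w) = w \<bullet> (A *v v)" using symm_inner[OF assms] .
  thus ?thesis
    by (simp add: matrix_vector_right_distrib matrix_vector_mult_scaleR inner_add_left
        inner_add_right power2_eq_square algebra_simps)
qed

lemma diag_step:
  fixes A D :: "real^'n^'n" and K :: "'n set" and q :: "'n \<Rightarrow> real^'n"
  assumes sA: "transpose A = A" and sD: "transpose D = D" and c: "c > 0"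
    and Apos: "\<And>x. c * (x \<bullet> x) \<le> x \<bullet> (A *v x)"
    and aK: "a \<notin> K"
  shows "\<exists>v. (\<forall>i\<in>K. v \<bullet> (A *v q i) = 0) \<and> v \<bullet> (A *v v) = 1 \<and>
     (\<forall>w. (\<forall>i\<in>K. w \<bullet> (A *v q i) = 0) \<and> w \<bullet> (A *v v) = 0 \<longrightarrow> w \<bullet> (D *v v) = 0)"
proof -
  define S where "S = (\<lambda>i. A *v q i) ` K"
  have fK: "finite K" by simp
  have "card K < CARD('n)"
    using aK by (intro psubset_card_mono) auto
  moreover have "dim S \<le> card K"
    unfolding S_def by (meson card_image_le dim_le_card' fK finite_imageI le_trans)
  ultimately have "dim S < DIM(real^'n)" by simp
  then obtain x :: "real^'n" where x0: "x \<noteq> 0" and xo: "\<And>y. y \<in> span S \<Longrightarrow> orthogonal x y"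
    using orthogonal_to_subspace_exists[OF \<open>dim S < DIM(real^'n)\<close>] by blast
  have xK: "\<forall>i\<in>K. x \<bullet> (A *v q i) = 0"
    using xo unfolding S_def orthogonal_def by (auto intro: span_base)
  define T where "T = (\<Inter>i\<in>K. {y. y \<bullet> (A *v q i) = 0}) \<inter> {y. y \<bullet> (A *v y) = 1}"
  have xAx: "x \<bullet> (A *v x) > 0"
    using Apos[of x] c x0 by (smt (verit) inner_gt_zero_iff mult_pos_pos)
  define y0 where "y0 = (1 / sqrt (x \<bullet> (A *v x))) *\<^sub>R x"
  have "y0 \<in> T"
    using xK xAx unfolding T_def y0_def
    by (auto simp: matrix_vector_mult_scaleR real_sqrt_mult[symmetric] power2_eq_square[symmetric])
  hence Tne: "T \<noteq> {}" by auto
  have cl: "closed T" unfolding T_def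
    by (intro closed_Int closed_INT ballI closed_Collect_eq continuous_intros linear_continuous_on) auto
  have bd: "bounded T"
  proof -
    have "norm y \<le> sqrt (1 / c)" if "y \<in> T" for y
    proof -
      have "c * (y \<bullet> y) \<le> 1" using Apos[of y] that unfolding T_def by auto
      hence "y \<bullet> y \<le> 1 / c" using c by (simp add: field_simps)
      thus ?thesis by (simp add: norm_eq_sqrt_inner)
    qed
    thus ?thesis unfolding bounded_iff by blast
  qed
  have "compact T" using cl bd by (simp add: compact_eq_bounded_closed)
  moreover have "continuous_on T (\<lambda>y. y \<bullet> (D *v y))"
    by (intro continuous_intros linear_continuous_on) auto
  ultimately obtain v where vT: "v \<in> T" and vmax: "\<And>y. y \<in> T \<Longrightarrow> y \<bullet> (D *v y) \<le> v \<bullet> (D *v v)"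
    using continuous_attains_sup[OF _ Tne] by blast
  have vK: "\<forall>i\<in>K. v \<bullet> (A *v q i) = 0" and vA: "v \<bullet> (A *v v) = 1" using vT unfolding T_def by auto
  have key: "w \<bullet> (D *v v) = 0" if wK: "\<forall>i\<in>K. w \<bullet> (A *v q i) = 0" and wv: "w \<bullet> (A *v v) = 0" for w
  proof -
    define lam where "lam = v \<bullet> (D *v v)"
    have "2 * t * (w \<bullet> (D *v v)) \<le> t^2 * (lam * (w \<bullet> (A *v w)) - w \<bullet> (D *v w))" for t
    proof -
      define y where "y = v + t *\<^sub>R w"
      define nn where "nn = y \<bullet> (A *v y)"
      have nn: "nn = 1 + t^2 * (w \<bullet> (A *v w))"
        unfolding nn_def y_def expand_quad[OF sA] using vA wv by simp
      have wAw: "w \<bullet> (A *v w) \<ge> 0" using Apos[of w] c by (smt (verit) inner_ge_zero mult_nonneg_nonneg)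
      have nnp: "nn > 0" using nn wAw by (smt (verit) zero_le_power2 mult_nonneg_nonneg)
      have yK: "\<forall>i\<in>K. y \<bullet> (A *v q i) = 0"
        using vK wK unfolding y_def by (simp add: inner_add_left)
      define y' where "y' = (1 / sqrt nn) *\<^sub>R y"
      have "y' \<in> T" using yK nnp unfolding T_def y'_def
        by (auto simp: matrix_vector_mult_scaleR nn_def[symmetric] real_sqrt_mult[symmetric]
            power2_eq_square[symmetric])
      hence "y' \<bullet> (D *v y') \<le> lam" using vmax lam_def by blast
      moreover have "y' \<bullet> (D *v y') = (y \<bullet> (D *v y)) / nn"
        unfolding y'_def using nnp
        by (simp add: matrix_vector_mult_scaleR real_sqrt_mult[symmetric] power2_eq_square[symmetric])
      ultimately have "y \<bullet> (D *v y) \<le> lam * nn" using nnp by (simp add: divide_le_eq)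
      moreover have "y \<bullet> (D *v y) = lam + 2 * t * (w \<bullet> (D *v v)) + t^2 * (w \<bullet> (D *v w))"
        unfolding y_def expand_quad[OF sD] lam_def by simp
      ultimately show ?thesis unfolding nn by (simp add: algebra_simps)
    qed
    thus ?thesis using quad_bound_zero by blast
  qed
  show ?thesis using vK vA key by blast
qed


lemma diag_vectors:
  fixes A D :: "real^'n^'n"
  assumes sA: "transpose A = A" and sD: "transpose D = D" and c: "c > 0"
    and Apos: "\<And>x. c * (x \<bullet> x) \<le> x \<bullet> (A *v x)"
  shows "\<exists>q::'n \<Rightarrow> real^'n. (\<forall>i j. q i \<bullet> (A *v q j) = (if i = j then 1 else 0))
          \<and> (\<forall>i j. i \<noteq> j \<longrightarrow> q i \<bullet> (D *v q j) = 0)"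
proof -
  have "\<exists>q::'n \<Rightarrow> real^'n. (\<forall>i\<in>K. \<forall>j\<in>K. q i \<bullet> (A *v q j) = (if i = j then 1 else 0))
          \<and> (\<forall>i\<in>K. \<forall>j\<in>K. i \<noteq> j \<longrightarrow> q i \<bullet> (D *v q j) = 0)
          \<and> (\<forall>x. (\<forall>i\<in>K. x \<bullet> (A *v q i) = 0) \<longrightarrow> (\<forall>i\<in>K. x \<bullet> (D *v q i) = 0))" for K :: "'n set"
  proof -
    have "finite K" by simp
    thus ?thesis
    proof (induction K rule: finite_induct)
      case empty
      show ?case by simp
    next
      case (insert a K)
      then obtain q where q1: "\<forall>i\<in>K. \<forall>j\<in>K. q i \<bullet> (A *v q j) = (if i = j then 1 else 0)"
        and q2: "\<forall>i\<in>K. \<forall>j\<in>K. i \<noteq> j \<longrightarrow> q i \<bullet> (D *v q j) = 0"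
        and q3: "\<forall>x. (\<forall>i\<in>K. x \<bullet> (A *v q i) = 0) \<longrightarrow> (\<forall>i\<in>K. x \<bullet> (D *v q i) = 0)"
        by blast
      obtain v where vK: "\<forall>i\<in>K. v \<bullet> (A *v q i) = 0" and vA: "v \<bullet> (A *v v) = 1"
        and key: "\<forall>w. (\<forall>i\<in>K. w \<bullet> (A *v q i) = 0) \<and> w \<bullet> (A *v v) = 0 \<longrightarrow> w \<bullet> (D *v v) = 0"
        using diag_step[OF sA sD c Apos insert(2)] by blast
      define q' where "q' = q(a := v)"
      have vD: "\<forall>i\<in>K. v \<bullet> (D *v q i) = 0" using q3 vK by blast
      show ?case
      proof (intro exI[of _ q'] conjI)
        show "\<forall>i\<in>insert a K. \<forall>j\<in>insert a K. q' i \<bullet> (A *v q' j) = (if i = j then 1 else 0)"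
          using q1 vK vA insert(2) symm_inner[OF sA] unfolding q'_def by auto
        show "\<forall>i\<in>insert a K. \<forall>j\<in>insert a K. i \<noteq> j \<longrightarrow> q' i \<bullet> (D *v q' j) = 0"
          using q2 vD insert(2) symm_inner[OF sD] unfolding q'_def by auto
        show "\<forall>x. (\<forall>i\<in>insert a K. x \<bullet> (A *v q' i) = 0) \<longrightarrow> (\<forall>i\<in>insert a K. x \<bullet> (D *v q' i) = 0)"
          using q3 key insert(2) unfolding q'_def by auto
      qed
    qed
  qed
  from this[of UNIV] show ?thesis by (metis UNIV_I)
qed

lemma diag_matrix:
  fixes A D :: "real^'n^'n"
  assumes sA: "transpose A = A" and sD: "transpose D = D" and c: "c > 0"
    and Apos: "\<And>x. c * (x \<bullet> x) \<le> x \<bullet> (A *v x)"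
  shows "\<exists>Q::real^'n^'n. transpose Q ** A ** Q = mat 1
      \<and> transpose Q ** D ** Q = (\<chi> i j. if i = j then column i Q \<bullet> (D *v column i Q) else 0)"
proof -
  obtain q :: "'n \<Rightarrow> real^'n" where q1: "\<forall>i j. q i \<bullet> (A *v q j) = (if i = j then 1 else 0)"
    and q2: "\<forall>i j. i \<noteq> j \<longrightarrow> q i \<bullet> (D *v q j) = 0"
    using diag_vectors[OF assms] by blast
  define Q :: "real^'n^'n" where "Q = (\<chi> i j. q j $ i)"
  have col: "column j Q = q j" for j unfolding Q_def column_def by (simp add: vec_eq_iff)
  show ?thesis
    by (intro exI[of _ Q] conjI) (auto simp: vec_eq_iff tQAQ_entry col q1 q2 mat_def)
qed

lemma ln_lower_quad:
  fixes x :: real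
  assumes "-1/2 \<le> x"
  shows "x - x^2 \<le> ln (1 + x)"
proof -
  define g where "g = (\<lambda>x::real. ln (1 + x) - x + x^2)"
  have der: "DERIV g y :> (y * (1 + 2*y) / (1 + y))" if "-1/2 \<le> y" for y
  proof -
    have "DERIV g y :> (1 / (1 + y) - 1 + 2 * y)"
      unfolding g_def using that
      by (auto intro!: derivative_eq_intros simp: field_simps)
    moreover have "1 / (1 + y) - 1 + 2 * y = y * (1 + 2*y) / (1 + y)"
      using that by (simp add: field_simps)
    ultimately show ?thesis by simp
  qed
  have g0: "g 0 = 0" by (simp add: g_def)
  show ?thesis
  proof (cases "x \<le> 0")
    case True
    have "g x \<ge> g 0"
    proof (rule DERIV_nonpos_imp_nonincreasing[OF True])
      fix y assume "x \<le> y" "y \<le> 0"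
      hence "y * (1 + 2*y) / (1 + y) \<le> 0" using assms
        by (intro divide_nonpos_pos mult_nonpos_nonneg) auto
      moreover have "-1/2 \<le> y" using \<open>x \<le> y\<close> assms by simp
      ultimately show "\<exists>z. DERIV g y :> z \<and> z \<le> 0" using der by blast
    qed
    thus ?thesis using g0 by (simp add: g_def)
  next
    case False
    have "g 0 \<le> g x"
    proof (rule DERIV_nonneg_imp_nondecreasing[of 0 x])
      show "0 \<le> x" using False by simp
    next
      fix y assume "0 \<le> y" "y \<le> x"
      hence "y * (1 + 2*y) / (1 + y) \<ge> 0" by simp
      moreover have "-1/2 \<le> y" using \<open>0 \<le> y\<close> by simp
      ultimately show "\<exists>z. DERIV g y :> z \<and> z \<ge> 0" using der by blast
    qed
    thus ?thesis using g0 by (simp add: g_def)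
  qed
qed

definition diagm :: "('n \<Rightarrow> real) \<Rightarrow> real^'n^'n" where
  "diagm s = (\<chi> i j. if i = j then s i else 0)"

lemma inv_unique:
  fixes A B :: "real^'n^'n"
  assumes "B ** A = mat 1"
  shows "matrix_inv A = B" "invertible A"
proof -
  have AB: "A ** B = mat 1" using matrix_left_right_inverse assms by metis
  have uq: "A' = B" if "A ** A' = mat 1 \<and> A' ** A = mat 1" for A'
  proof -
    have "A' = A' ** (A ** B)" by (simp add: AB)
    also have "\<dots> = (A' ** A) ** B" by (simp only: matrix_mul_assoc)
    also have "\<dots> = B" using that by simp
    finally show ?thesis .
  qed
  have "A ** B = mat 1 \<and> B ** A = mat 1" using AB assms by simp
  thus "matrix_inv A = B" unfolding matrix_inv_def
    by (rule someI2) (rule uq)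
  show "invertible A" unfolding invertible_def using AB assms by blast
qed

lemma inv_props:
  fixes A :: "real^'n^'n"
  assumes "invertible A"
  shows "A ** matrix_inv A = mat 1" "matrix_inv A ** A = mat 1"
proof -
  have "\<exists>A'. A ** A' = mat 1 \<and> A' ** A = mat 1" using assms unfolding invertible_def .
  hence "A ** matrix_inv A = mat 1 \<and> matrix_inv A ** A = mat 1"
    unfolding matrix_inv_def by (rule someI_ex)
  thus "A ** matrix_inv A = mat 1" "matrix_inv A ** A = mat 1" by auto
qed

lemma gen_eig:
  fixes A D :: "real^'n^'n"
  assumes sA: "transpose A = A" and sD: "transpose D = D" and c: "c > 0"
    and Apos: "\<And>x. c * (x \<bullet> x) \<le> x \<bullet> (A *v x)"
  obtains Q s where "transpose Q ** A ** Q = mat 1" "transpose Q ** D ** Q = diagm s"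
    "Q ** transpose Q = matrix_inv A" "invertible A" "det A * (det Q)^2 = 1"
    "\<And>i. s i = column i Q \<bullet> (D *v column i Q)"
proof -
  obtain Q :: "real^'n^'n" where Q1: "transpose Q ** A ** Q = mat 1"
    and Q2: "transpose Q ** D ** Q = (\<chi> i j. if i = j then column i Q \<bullet> (D *v column i Q) else 0)"
    using diag_matrix[OF assms] by blast
  define s where "s = (\<lambda>i. column i Q \<bullet> (D *v column i Q))"
  have Q2': "transpose Q ** D ** Q = diagm s" using Q2 by (simp add: diagm_def s_def)
  have "det (transpose Q ** A ** Q) = 1" using Q1 by simp
  hence dA: "det A * (det Q)^2 = 1" by (simp add: det_mul power2_eq_square mult_ac)
  hence "det Q \<noteq> 0" by auto
  hence iQ: "invertible Q" by (simp add: invertible_det_nz)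
  have "Q ** transpose Q ** A = mat 1"
  proof -
    have "Q ** (transpose Q ** A ** Q) ** matrix_inv Q = Q ** matrix_inv Q" using Q1 by simp
    also have "\<dots> = mat 1" using inv_props[OF iQ] by simp
    finally have "Q ** transpose Q ** A ** (Q ** matrix_inv Q) = mat 1" by (simp only: matrix_mul_assoc)
    thus ?thesis using inv_props[OF iQ] by simp
  qed
  hence mi: "matrix_inv A = Q ** transpose Q" and iA: "invertible A" using inv_unique by blast+
  show ?thesis by (rule that[OF Q1 Q2' mi[symmetric] iA dA]) (simp add: s_def)
qed

lemma det_pos:
  fixes A :: "real^'n^'n"
  assumes sA: "transpose A = A" and c: "c > 0"
    and Apos: "\<And>x. c * (x \<bullet> x) \<le> x \<bullet> (A *v x)"
  shows "det A > 0" "invertible A"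
proof -
  obtain Q s where "transpose Q ** A ** Q = mat 1" "transpose Q ** A ** Q = diagm s"
    "Q ** transpose Q = matrix_inv A" and iA: "invertible A" and d: "det A * (det Q)^2 = 1"
    "\<And>i. s i = column i Q \<bullet> (A *v column i Q)"
    using gen_eig[OF sA sA c Apos] by metis
  show "invertible A" by (rule iA)
  show "det A > 0" using d mult_nonpos_nonneg[of "det A" "(det Q)^2"] by (cases "det A > 0") auto
qed

lemma trace_diagm: "trace (diagm s) = sum s UNIV"
  unfolding trace_def diagm_def by simp

lemma dsum: "(\<Sum>k\<in>(UNIV::('n::finite) set). (if i = k then a else 0) * (f k::real)) = a * f i"
proof -
  have "(\<Sum>k\<in>UNIV. (if i = k then a else 0) * f k) = (\<Sum>k\<in>UNIV. if k = i then a * f k else 0)"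
    by (rule sum.cong) auto
  also have "\<dots> = a * f i" by simp
  finally show ?thesis .
qed
lemma diagm_sq: "diagm s ** diagm s = diagm (\<lambda>i. (s i)^2)"
  by (simp add: diagm_def matrix_matrix_mult_def vec_eq_iff power2_eq_square dsum)

lemma det_diagm: "det (diagm s) = prod s UNIV"
  by (subst det_diagonal) (auto simp: diagm_def)


lemma mat1_inv: "matrix_inv (mat 1 :: real^'n^'n) = mat 1"
  using inv_unique(1)[of "mat 1" "mat 1"] by simp

lemma inv_sym:
  fixes A :: "real^'n^'n"
  assumes "transpose A = A" "invertible A"
  shows "transpose (matrix_inv A) = matrix_inv A"
proof -
  have "transpose (matrix_inv A) ** A = mat 1"
    using inv_props(1)[OF assms(2)] matrix_transpose_mul[of A "matrix_inv A"] assms(1) by simp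
  thus ?thesis using inv_unique(1) by metis
qed

lemma inv_apply:
  fixes A :: "real^'n^'n"
  assumes "invertible A"
  shows "A *v (matrix_inv A *v x) = x" "matrix_inv A *v (A *v x) = x"
  using inv_props[OF assms] by (simp_all add: matrix_vector_mul_assoc)

lemma inv_nonneg:
  fixes A :: "real^'n^'n"
  assumes "transpose A = A" "invertible A" "\<And>x. 0 \<le> x \<bullet> (A *v x)"
  shows "0 \<le> x \<bullet> (matrix_inv A *v x)"
proof -
  define u where "u = matrix_inv A *v x"
  have "x = A *v u" unfolding u_def using inv_apply[OF assms(2)] by simp
  hence "x \<bullet> (matrix_inv A *v x) = (A *v u) \<bullet> u" unfolding u_def by simp
  also have "\<dots> = u \<bullet> (A *v u)" by (simp add: inner_commute)
  finally show ?thesis using assms(3) by simp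
qed

lemma loewner_inv:
  fixes A B :: "real^'n^'n"
  assumes sA: "transpose A = A" and sB: "transpose B = B"
    and iA: "invertible A" and iB: "invertible B"
    and Ann: "\<And>x. 0 \<le> x \<bullet> (A *v x)"
    and AB: "\<And>x. x \<bullet> (A *v x) \<le> x \<bullet> (B *v x)"
  shows "x \<bullet> (matrix_inv B *v x) \<le> x \<bullet> (matrix_inv A *v x)"
proof -
  define y where "y = matrix_inv B *v x"
  define u where "u = matrix_inv A *v x"
  have Au: "A *v u = x" unfolding u_def using inv_apply[OF iA] by simp
  have By: "B *v y = x" unfolding y_def using inv_apply[OF iB] by simp
  have "0 \<le> (y - u) \<bullet> (A *v (y - u))" by (rule Ann)
  also have "\<dots> = y \<bullet> (A *v y) - 2 * (y \<bullet> (A *v u)) + u \<bullet> (A *v u)"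
    using symm_inner[OF sA, of u y]
    by (simp add: matrix_vector_mult_diff_distrib inner_diff_left inner_diff_right algebra_simps)
  also have "\<dots> \<le> y \<bullet> (B *v y) - 2 * (y \<bullet> (A *v u)) + u \<bullet> (A *v u)" using AB[of y] by simp
  also have "\<dots> = u \<bullet> x - y \<bullet> x" using Au By by simp
  finally have "y \<bullet> x \<le> u \<bullet> x" by simp
  thus ?thesis unfolding y_def u_def by (simp add: inner_commute)
qed

lemma trace_axis: "trace (X::real^'n^'n) = (\<Sum>i\<in>UNIV. axis i 1 \<bullet> (X *v axis i 1))"
  by (simp add: trace_def matrix_vector_mult_def inner_vec_def axis_def if_distrib if_distribR cong: if_cong)

lemma trace_mono:
  fixes X Y :: "real^'n^'n"
  assumes "\<And>x. x \<bullet> (X *v x) \<le> x \<bullet> (Y *v x)"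
  shows "trace X \<le> trace Y"
  unfolding trace_axis by (rule sum_mono) (rule assms)

lemma trace_nonneg:
  fixes X :: "real^'n^'n"
  assumes "\<And>x. 0 \<le> x \<bullet> (X *v x)"
  shows "0 \<le> trace X"
  unfolding trace_axis by (rule sum_nonneg) (rule assms)

lemma trace_mult_diagm: "trace (B ** diagm s) = (\<Sum>i\<in>UNIV. B $ i $ i * s i)"
  unfolding trace_def matrix_matrix_mult_def diagm_def
  by (simp add: if_distrib if_distribR cong: if_cong)


lemma trace_prod_nonneg:
  fixes P W :: "real^'n^'n"
  assumes Pnn: "\<And>x. 0 \<le> x \<bullet> (P *v x)"
    and sW: "transpose W = W" and Wnn: "\<And>x. 0 \<le> x \<bullet> (W *v x)"
  shows "0 \<le> trace (P ** W)"
proof -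
  have sI: "transpose (mat 1 :: real^'n^'n) = mat 1" by simp
  have Ip: "\<And>x. 1 * (x \<bullet> x) \<le> x \<bullet> ((mat 1 :: real^'n^'n) *v x)" by simp
  obtain Q s where Q1: "transpose Q ** mat 1 ** Q = mat 1" and Q2: "transpose Q ** W ** Q = diagm s"
    and Q3: "Q ** transpose Q = matrix_inv (mat 1 :: real^'n^'n)"
    and "invertible (mat 1 :: real^'n^'n)" "det (mat 1 :: real^'n^'n) * (det Q)^2 = 1"
    and Qs: "\<And>i. s i = column i Q \<bullet> (W *v column i Q)"
    using gen_eig[OF sI sW zero_less_one Ip] by metis
  have QQ: "Q ** transpose Q = mat 1" using Q3 mat1_inv by simp
  have "W = (Q ** transpose Q) ** W ** (Q ** transpose Q)" using QQ by simp
  also have "\<dots> = Q ** (transpose Q ** W ** Q) ** transpose Q" by (simp only: matrix_mul_assoc)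
  finally have Weq: "W = Q ** diagm s ** transpose Q" using Q2 by simp
  have "trace (P ** W) = trace ((P ** Q ** diagm s) ** transpose Q)" using Weq by (simp only: matrix_mul_assoc)
  also have "\<dots> = trace (transpose Q ** (P ** Q ** diagm s))" by (rule trace_mul_sym)
  also have "\<dots> = trace ((transpose Q ** P ** Q) ** diagm s)" by (simp only: matrix_mul_assoc)
  also have "\<dots> = (\<Sum>i\<in>UNIV. (transpose Q ** P ** Q) $ i $ i * s i)" by (rule trace_mult_diagm)
  finally have "trace (P ** W) = (\<Sum>i\<in>UNIV. (column i Q \<bullet> (P *v column i Q)) * s i)"
    by (simp add: tQAQ_entry)
  also have "\<dots> \<ge> 0" using Pnn Wnn Qs by (intro sum_nonneg mult_nonneg_nonneg) auto
  finally show ?thesis .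
qed

lemma mm_diff_r: "((Y::real^'n^'n) - X) ** W = Y ** W - X ** W"
  by (simp add: matrix_matrix_mult_def vec_eq_iff algebra_simps sum_subtractf)
lemma mm_add_r: "((Y::real^'n^'n) + X) ** W = Y ** W + X ** W"
  by (simp add: matrix_matrix_mult_def vec_eq_iff algebra_simps sum.distrib)
lemma mm_diff_l: "W ** ((Y::real^'n^'n) - X) = W ** Y - W ** X"
  by (simp add: matrix_matrix_mult_def vec_eq_iff algebra_simps sum_subtractf)

lemma trace_mono_prod:
  fixes X Y W :: "real^'n^'n"
  assumes XY: "\<And>x. x \<bullet> (X *v x) \<le> x \<bullet> (Y *v x)"
    and sW: "transpose W = W" and Wnn: "\<And>x. 0 \<le> x \<bullet> (W *v x)"
  shows "trace (X ** W) \<le> trace (Y ** W)"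
proof -
  have "0 \<le> trace ((Y - X) ** W)"
    by (rule trace_prod_nonneg[OF _ sW Wnn]) (use XY in \<open>simp add: matrix_vector_mult_diff_rdistrib inner_diff_right\<close>)
  thus ?thesis by (simp add: mm_diff_r trace_sub)
qed

lemma frob_sq:
  fixes X :: "real^'n^'n"
  assumes "transpose X = X"
  shows "trace (X ** X) = (norm X)^2"
proof -
  have "\<And>i k. X $ k $ i = X $ i $ k" using assms by (metis transpose_def vec_lambda_beta)
  hence "trace (X ** X) = (\<Sum>i\<in>UNIV. \<Sum>k\<in>UNIV. X $ i $ k * X $ i $ k)"
    by (simp add: trace_def matrix_matrix_mult_def)
  also have "\<dots> = X \<bullet> X" by (simp add: inner_vec_def)
  finally show ?thesis by (simp add: power2_norm_eq_inner)
qed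

lemma op_norm_quad:
  fixes E :: "real^'n^'n"
  assumes "op_norm E \<le> e"
  shows "\<bar>x \<bullet> (E *v x)\<bar> \<le> e * (x \<bullet> x)"
proof -
  have "\<bar>x \<bullet> (E *v x)\<bar> \<le> norm x * norm (E *v x)" by (rule Cauchy_Schwarz_ineq2)
  also have "norm (E *v x) \<le> op_norm E * norm x"
    unfolding op_norm_def by (rule onorm) simp
  hence "norm x * norm (E *v x) \<le> norm x * (op_norm E * norm x)" by (simp add: mult_left_mono)
  also have "\<dots> \<le> norm x * (e * norm x)" using assms by (simp add: mult_left_mono mult_right_mono)
  also have "\<dots> = e * (x \<bullet> x)" by (simp add: power2_norm_eq_inner[symmetric] power2_eq_square)
  finally show ?thesis .
qed


lemma logdet_step:
  fixes A D :: "real^'n^'n"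
  assumes sA: "transpose A = A" and sD: "transpose D = D" and c: "c > 0"
    and Apos: "\<And>x. c * (x \<bullet> x) \<le> x \<bullet> (A *v x)"
    and ADnn: "\<And>x. 0 \<le> x \<bullet> ((A + D) *v x)"
    and mu0: "0 \<le> mu" and mu1: "mu \<le> 1/2"
  shows "ln (det A) + mu * trace (D ** matrix_inv A) - mu^2 * trace (D ** matrix_inv A ** D ** matrix_inv A)
           \<le> ln (det (A + mu *\<^sub>R D))"
proof -
  obtain Q s where Q1: "transpose Q ** A ** Q = mat 1" and Q2: "transpose Q ** D ** Q = diagm s"
    and Q3: "Q ** transpose Q = matrix_inv A"
    and iA: "invertible A" and dA: "det A * (det Q)^2 = 1"
    and Qs: "\<And>i. s i = column i Q \<bullet> (D *v column i Q)"
    using gen_eig[OF sA sD c Apos] by metis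
  have dpos: "det A > 0" using det_pos[OF sA c Apos] by simp
  have qA: "column i Q \<bullet> (A *v column i Q) = 1" for i
    using arg_cong[OF Q1, of "\<lambda>M. M $ i $ i"] by (simp add: tQAQ_entry mat_def)
  have sge: "s i \<ge> -1" for i
    using ADnn[of "column i Q"] qA[of i] Qs[of i] by (simp add: matrix_vector_mult_add_rdistrib inner_add_right)
  have pos: "1 + mu * s i \<ge> 1/2" for i
  proof -
    have "mu * s i \<ge> mu * (-1)" using sge[of i] mu0 by (intro mult_left_mono) auto
    thus ?thesis using mu1 by simp
  qed
  have "transpose Q ** (A + mu *\<^sub>R D) ** Q = transpose Q ** A ** Q + mu *\<^sub>R (transpose Q ** D ** Q)"
    by (simp add: matrix_add_ldistrib mm_add_r matrix_scalar_ac scalar_matrix_assoc)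
  also have "\<dots> = diagm (\<lambda>i. 1 + mu * s i)" using Q1 Q2
    by (simp add: diagm_def mat_def vec_eq_iff)
  finally have "det (transpose Q ** (A + mu *\<^sub>R D) ** Q) = prod (\<lambda>i. 1 + mu * s i) UNIV"
    by (simp add: det_diagm)
  hence "(det Q)^2 * det (A + mu *\<^sub>R D) = prod (\<lambda>i. 1 + mu * s i) UNIV"
    by (simp add: det_mul power2_eq_square mult_ac)
  hence dAD: "det (A + mu *\<^sub>R D) = det A * prod (\<lambda>i. 1 + mu * s i) UNIV"
  proof -
    have "det A * ((det Q)^2 * det (A + mu *\<^sub>R D)) = det A * prod (\<lambda>i. 1 + mu * s i) UNIV"
      using \<open>(det Q)^2 * det (A + mu *\<^sub>R D) = _\<close> by simp
    thus ?thesis using dA by (simp add: mult.assoc[symmetric])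
  qed
  have ppos: "prod (\<lambda>i. 1 + mu * s i) UNIV > 0" proof (intro prod_pos)
    fix i show "0 < 1 + mu * s i" using pos[of i] by linarith
  qed
  have "ln (det (A + mu *\<^sub>R D)) = ln (det A) + ln (prod (\<lambda>i. 1 + mu * s i) UNIV)"
    using dAD dpos ppos by (simp add: ln_mult_pos)
  also have "ln (prod (\<lambda>i. 1 + mu * s i) UNIV) = (\<Sum>i\<in>UNIV. ln (1 + mu * s i))"
  proof (rule ln_prod)
    fix i show "1 + mu * s i \<noteq> 0" using pos[of i] by linarith
  qed simp
  moreover have "(\<Sum>i\<in>UNIV. ln (1 + mu * s i)) \<ge> (\<Sum>i\<in>UNIV. mu * s i - (mu * s i)^2)"
  proof (rule sum_mono)
    fix i
    have "mu * s i \<ge> -1/2" using pos[of i] by simp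
    thus "mu * s i - (mu * s i)^2 \<le> ln (1 + mu * s i)" by (rule ln_lower_quad)
  qed
  moreover have "(\<Sum>i\<in>UNIV. mu * s i - (mu * s i)^2) = mu * sum s UNIV - mu^2 * (\<Sum>i\<in>UNIV. (s i)^2)"
    by (simp add: sum_subtractf sum_distrib_left power_mult_distrib)
  moreover have "sum s UNIV = trace (D ** matrix_inv A)"
  proof -
    have "sum s UNIV = trace (transpose Q ** D ** Q)" using Q2 by (simp add: trace_diagm)
    also have "\<dots> = trace (transpose Q ** (D ** Q))" by (simp only: matrix_mul_assoc)
    also have "\<dots> = trace ((D ** Q) ** transpose Q)" by (rule trace_mul_sym)
    also have "\<dots> = trace (D ** (Q ** transpose Q))" by (simp only: matrix_mul_assoc)
    finally show ?thesis using Q3 by simp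
  qed
  moreover have "(\<Sum>i\<in>UNIV. (s i)^2) = trace (D ** matrix_inv A ** D ** matrix_inv A)"
  proof -
    have "(\<Sum>i\<in>UNIV. (s i)^2) = trace (diagm s ** diagm s)" by (simp add: diagm_sq trace_diagm)
    also have "\<dots> = trace ((transpose Q ** D ** Q) ** (transpose Q ** D ** Q))" using Q2 by simp
    also have "\<dots> = trace (transpose Q ** (D ** (Q ** transpose Q) ** D ** Q))" by (simp only: matrix_mul_assoc)
    also have "\<dots> = trace ((D ** (Q ** transpose Q) ** D ** Q) ** transpose Q)" by (rule trace_mul_sym)
    also have "\<dots> = trace (D ** (Q ** transpose Q) ** D ** (Q ** transpose Q))" by (simp only: matrix_mul_assoc)
    finally show ?thesis using Q3 by simp
  qed
  ultimately show ?thesis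
    by (smt (verit))
qed

lemma mat_scale: "mat r = r *\<^sub>R (mat 1 :: real^'n^'n)"
  by (simp add: mat_def vec_eq_iff)

lemma det_mat: "det (mat r :: real^'n^'n) = r ^ CARD('n)"
  by (subst det_diagonal) (auto simp: mat_def)

lemma inv_scale:
  fixes A :: "real^'n^'n"
  assumes "invertible A" "k \<noteq> 0"
  shows "matrix_inv (k *\<^sub>R A) = (1/k) *\<^sub>R matrix_inv A"
proof -
  have "((1/k) *\<^sub>R matrix_inv A) ** (k *\<^sub>R A) = mat 1"
    using inv_props(2)[OF assms(1)] assms(2)
    by (simp add: matrix_scalar_ac scalar_matrix_assoc[symmetric])
  thus ?thesis using inv_unique(1) by blast
qed

lemma inv_scaleI:
  assumes "k \<noteq> 0"
  shows "matrix_inv (k *\<^sub>R mat 1 :: real^'n^'n) = (1/k) *\<^sub>R mat 1"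
proof -
  have i1: "invertible (mat 1 :: real^'n^'n)" using inv_unique(2)[of "mat 1" "mat 1"] by simp
  show ?thesis by (simp add: inv_scale[OF i1 assms] mat1_inv)
qed

lemma quad_scaleI: "x \<bullet> ((k *\<^sub>R mat 1 :: real^'n^'n) *v x) = k * (x \<bullet> x)"
  by (simp add: scaleR_matrix_vector_assoc[symmetric])

lemma quad_add: "x \<bullet> (((A::real^'n^'n) + B) *v x) = x \<bullet> (A *v x) + x \<bullet> (B *v x)"
  by (simp add: matrix_vector_mult_add_rdistrib inner_add_right)

lemma quad_diff: "x \<bullet> (((A::real^'n^'n) - B) *v x) = x \<bullet> (A *v x) - x \<bullet> (B *v x)"
  by (simp add: matrix_vector_mult_diff_rdistrib inner_diff_right)

lemma quad_scale: "x \<bullet> ((k *\<^sub>R (A::real^'n^'n)) *v x) = k * (x \<bullet> (A *v x))"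
  by (simp add: scaleR_matrix_vector_assoc[symmetric])

lemma trace_scale: "trace (k *\<^sub>R (A::real^'n^'n)) = k * trace A"
  by (simp add: trace_def sum_distrib_left)

lemma trace_scaleI_mult: "trace ((k *\<^sub>R mat 1 :: real^'n^'n) ** B) = k * trace B"
  by (simp add: scalar_matrix_assoc[symmetric] trace_scale)

lemma trace_mat1: "trace (mat 1 :: real^'n^'n) = real CARD('n)"
  by (simp add: trace_I)

lemma logdet_range:
  fixes E :: "real^'n^'n"
  assumes sE: "transpose E = E" and Enn: "\<And>x. 0 \<le> x \<bullet> (E *v x)" and nE: "norm E \<le> 1"
    and g: "g > 0"
  shows "real CARD('n) * ln g \<le> ln (det (g *\<^sub>R mat 1 + E))"
    "ln (det (g *\<^sub>R mat 1 + E)) \<le> real CARD('n) * ln g + real CARD('n) * ln (1 + 1/g)"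
proof -
  define A :: "real^'n^'n" where "A = g *\<^sub>R mat 1"
  have sA: "transpose A = A" by (simp add: A_def transpose_scalar)
  have Apos: "\<And>x. g * (x \<bullet> x) \<le> x \<bullet> (A *v x)" by (simp add: A_def quad_scaleI)
  obtain Q s where Q1: "transpose Q ** A ** Q = mat 1" and Q2: "transpose Q ** E ** Q = diagm s"
    and Q3: "Q ** transpose Q = matrix_inv A"
    and iA: "invertible A" and dA: "det A * (det Q)^2 = 1"
    and Qs: "\<And>i. s i = column i Q \<bullet> (E *v column i Q)"
    using gen_eig[OF sA sE g Apos] by metis
  have detA: "det A = g ^ CARD('n)" unfolding A_def mat_scale[symmetric] by (rule det_mat)
  have s0: "s i \<ge> 0" for i using Qs Enn by simp
  have "transpose Q ** (A + E) ** Q = transpose Q ** A ** Q + transpose Q ** E ** Q"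
    by (simp add: matrix_add_ldistrib mm_add_r)
  also have "\<dots> = diagm (\<lambda>i. 1 + s i)" using Q1 Q2 by (simp add: diagm_def mat_def vec_eq_iff)
  finally have "det (transpose Q ** (A + E) ** Q) = prod (\<lambda>i. 1 + s i) UNIV"
    by (simp add: det_diagm)
  hence "(det Q)^2 * det (A + E) = prod (\<lambda>i. 1 + s i) UNIV"
    by (simp add: det_mul power2_eq_square mult_ac)
  hence eq: "det A * ((det Q)^2 * det (A + E)) = det A * prod (\<lambda>i. 1 + s i) UNIV" by simp
  have "det (A + E) = (det A * (det Q)^2) * det (A + E)" using dA by simp
  also have "\<dots> = det A * ((det Q)^2 * det (A + E))" by (simp only: mult.assoc)
  also have "\<dots> = det A * prod (\<lambda>i. 1 + s i) UNIV" by (rule eq)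
  finally have dAE: "det (A + E) = g ^ CARD('n) * prod (\<lambda>i. 1 + s i) UNIV"
    unfolding detA .
  have ppos: "prod (\<lambda>i. 1 + s i) UNIV > 0"
  proof (intro prod_pos)
    fix i show "0 < 1 + s i" using s0[of i] by linarith
  qed
  have lnE: "ln (det (A + E)) = real CARD('n) * ln g + (\<Sum>i\<in>UNIV. ln (1 + s i))"
  proof -
    have "ln (det (A + E)) = ln (g ^ CARD('n)) + ln (prod (\<lambda>i. 1 + s i) UNIV)"
      using dAE g ppos by (simp add: ln_mult_pos)
    also have "ln (prod (\<lambda>i. 1 + s i) UNIV) = (\<Sum>i\<in>UNIV. ln (1 + s i))"
    proof (rule ln_prod)
      fix i show "1 + s i \<noteq> 0" using s0[of i] by linarith
    qed simp
    finally show ?thesis by (simp add: ln_realpow)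
  qed
  have "(\<Sum>i\<in>UNIV. (s i)^2) = trace (E ** matrix_inv A ** E ** matrix_inv A)"
  proof -
    have "(\<Sum>i\<in>UNIV. (s i)^2) = trace (diagm s ** diagm s)" by (simp add: diagm_sq trace_diagm)
    also have "\<dots> = trace ((transpose Q ** E ** Q) ** (transpose Q ** E ** Q))" using Q2 by simp
    also have "\<dots> = trace (transpose Q ** (E ** (Q ** transpose Q) ** E ** Q))" by (simp only: matrix_mul_assoc)
    also have "\<dots> = trace ((E ** (Q ** transpose Q) ** E ** Q) ** transpose Q)" by (rule trace_mul_sym)
    also have "\<dots> = trace (E ** (Q ** transpose Q) ** E ** (Q ** transpose Q))" by (simp only: matrix_mul_assoc)
    finally show ?thesis using Q3 by simp
  qed
  also have "\<dots> = (1/g)^2 * trace (E ** E)"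
    using g unfolding A_def inv_scaleI[OF g[THEN less_imp_neq, symmetric]]
    by (simp add: matrix_scalar_ac scalar_matrix_assoc[symmetric] trace_scale power2_eq_square)
  also have "\<dots> \<le> (1/g)^2"
  proof -
    have "(norm E)^2 \<le> 1" using nE by (simp add: power_le_one)
    thus ?thesis using frob_sq[OF sE] by (simp add: mult_left_le)
  qed
  finally have sqs: "(\<Sum>i\<in>UNIV. (s i)^2) \<le> (1/g)^2" .
  have sle: "s i \<le> 1/g" for i
  proof -
    have "(s i)^2 \<le> (\<Sum>i\<in>UNIV. (s i)^2)"
      by (rule member_le_sum) auto
    hence "(s i)^2 \<le> (1/g)^2" using sqs by simp
    thus ?thesis using g s0[of i] by (simp add: power2_le_iff_abs_le)
  qed
  have "(\<Sum>i\<in>UNIV. ln (1 + s i)) \<ge> 0" using s0 by (intro sum_nonneg) simp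
  thus "real CARD('n) * ln g \<le> ln (det (g *\<^sub>R mat 1 + E))" using lnE A_def by simp
  have "(\<Sum>i\<in>UNIV. ln (1 + s i)) \<le> (\<Sum>i\<in>(UNIV::'n set). ln (1 + 1/g))"
  proof (rule sum_mono)
    fix i show "ln (1 + s i) \<le> ln (1 + 1/g)" using sle[of i] s0[of i] by simp
  qed
  thus "ln (det (g *\<^sub>R mat 1 + E)) \<le> real CARD('n) * ln g + real CARD('n) * ln (1 + 1/g)"
    using lnE A_def by simp
qed

lemma mv_sum: "finite S \<Longrightarrow> (sum f S) *v x = (\<Sum>z\<in>S. f z *v (x::real^'n))"
  by (induction S rule: finite_induct) (simp_all add: matrix_vector_mult_add_rdistrib)

lemma transpose_add: "transpose ((A::real^'n^'m) + B) = transpose A + transpose B"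
  by (simp add: transpose_def vec_eq_iff)

lemma transpose_zero: "transpose (0::real^'n^'m) = 0"
  by (simp add: transpose_def vec_eq_iff)

lemma sum_delta_scale:
  assumes "finite S" "y \<in> S"
  shows "(\<Sum>z\<in>S. delta y z *\<^sub>R (f z :: 'a::real_vector)) = f y"
proof -
  have "(\<Sum>z\<in>S. delta y z *\<^sub>R f z) = (\<Sum>z\<in>S. if z = y then f z else 0)"
    by (rule sum.cong) (auto simp: delta_def)
  thus ?thesis using assms by simp
qed

lemma sum_delta1:
  assumes "finite S" "y \<in> S"
  shows "(\<Sum>z\<in>S. delta y z) = 1"
  using sum_delta_scale[OF assms, of "\<lambda>_. 1::real"] by simp

lemma transpose_sum: "finite S \<Longrightarrow> transpose (sum f S) = (\<Sum>z\<in>S. transpose (f z :: real^'n^'m))"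
  by (induction S rule: finite_induct) (simp_all add: transpose_add transpose_zero)

lemma fsupp_delta: "fsupp (delta y) = {y}"
  by (auto simp: fsupp_def delta_def)

lemma expW_S:
  assumes "finite S" "fsupp P \<subseteq> S"
  shows "expW W P = (\<Sum>z\<in>S. P z *\<^sub>R W z)"
  unfolding expW_def
  by (rule sum.mono_neutral_left) (use assms in \<open>auto simp: fsupp_def\<close>)

lemma sum_S:
  assumes "finite S" "fsupp P \<subseteq> S"
  shows "sum P (fsupp P) = sum P S"
  by (rule sum.mono_neutral_left) (use assms in \<open>auto simp: fsupp_def\<close>)

lemma expW_delta: "expW W (delta y) = W y"
  unfolding expW_def fsupp_delta by (simp add: delta_def)

lemma fsupp_mix: "fsupp (\<lambda>z. a * P z + b * delta y z) \<subseteq> insert y (fsupp P)"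
  by (auto simp: fsupp_def delta_def)

lemma expW_mix:
  assumes "finite (fsupp P)"
  shows "expW W (\<lambda>z. a * P z + b * delta y z) = a *\<^sub>R expW W P + b *\<^sub>R W y"
proof -
  let ?S = "insert y (fsupp P)"
  have fS: "finite ?S" using assms by simp
  have "expW W (\<lambda>z. a * P z + b * delta y z) = (\<Sum>z\<in>?S. (a * P z + b * delta y z) *\<^sub>R W z)"
    by (rule expW_S[OF fS fsupp_mix])
  also have "\<dots> = a *\<^sub>R (\<Sum>z\<in>?S. P z *\<^sub>R W z) + b *\<^sub>R (\<Sum>z\<in>?S. delta y z *\<^sub>R W z)"
    by (simp add: scaleR_add_left sum.distrib scaleR_sum_right)
  also have "(\<Sum>z\<in>?S. P z *\<^sub>R W z) = expW W P" by (rule expW_S[symmetric]) (use fS in auto)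
  also have "(\<Sum>z\<in>?S. delta y z *\<^sub>R W z) = W y" using fS by (simp add: sum_delta_scale)
  finally show ?thesis .
qed

lemma expW_quad:
  assumes "finite (fsupp P)"
  shows "x \<bullet> (expW W P *v x) = (\<Sum>z\<in>fsupp P. P z * (x \<bullet> (W z *v x)))"
  unfolding expW_def using assms
  by (simp add: mv_sum inner_sum_right scaleR_matrix_vector_assoc[symmetric])

lemma expW_sym:
  assumes "finite (fsupp P)" "\<And>z. transpose (W z) = W z"
  shows "transpose (expW W P) = expW W P"
  unfolding expW_def using assms by (simp add: transpose_sum transpose_scalar)

lemma expW_nn:
  assumes "is_fdist P S" "\<And>z. 0 \<le> x \<bullet> (W z *v x)"
  shows "0 \<le> x \<bullet> (expW W P *v x)"
  using assms unfolding is_fdist_def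
  by (simp add: expW_quad) (intro sum_nonneg mult_nonneg_nonneg; simp)

lemma expW_norm:
  assumes "is_fdist P S" "\<And>z. norm (W z) \<le> 1"
  shows "norm (expW W P) \<le> 1"
proof -
  have "norm (expW W P) \<le> (\<Sum>z\<in>fsupp P. norm (P z *\<^sub>R W z))" unfolding expW_def by (rule norm_sum)
  also have "\<dots> \<le> (\<Sum>z\<in>fsupp P. P z)"
    using assms unfolding is_fdist_def by (intro sum_mono) (simp add: mult_left_le)
  also have "\<dots> = 1" using assms unfolding is_fdist_def by simp
  finally show ?thesis .
qed

lemma fdist_delta: "y \<in> S \<Longrightarrow> is_fdist (delta y) S"
  by (simp add: is_fdist_def fsupp_delta) (simp add: delta_def)

lemma fdist_mix:
  assumes P: "is_fdist P S" and y: "y \<in> S" and m0: "0 \<le> m" and m1: "m \<le> 1"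
  shows "is_fdist (\<lambda>z. (1 - m) * P z + m * delta y z) S"
proof -
  let ?Q = "\<lambda>z. (1 - m) * P z + m * delta y z"
  let ?S = "insert y (fsupp P)"
  have fS: "finite ?S" using P by (simp add: is_fdist_def)
  have sub: "fsupp ?Q \<subseteq> ?S" by (rule fsupp_mix)
  have "sum ?Q (fsupp ?Q) = sum ?Q ?S" by (rule sum_S[OF fS sub])
  also have "\<dots> = (1 - m) * sum P ?S + m * sum (delta y) ?S"
    by (simp add: sum.distrib sum_distrib_left)
  also have "sum P ?S = 1" using sum_S[OF fS, of P] P by (auto simp: is_fdist_def)
  also have "sum (delta y) ?S = 1" using fS by (simp add: sum_delta1)
  finally have s1: "sum ?Q (fsupp ?Q) = 1" by simp
  have nn: "\<forall>z. 0 \<le> ?Q z" using P m0 m1 unfolding is_fdist_def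
    by (auto simp: delta_def intro!: add_nonneg_nonneg mult_nonneg_nonneg)
  show ?thesis unfolding is_fdist_def
    using s1 nn finite_subset[OF sub fS] sub P y by (auto simp: is_fdist_def)
qed

lemma trace_le_sqrt:
  fixes W :: "real^'n^'n"
  assumes "norm W \<le> 1"
  shows "trace W \<le> sqrt (real CARD('n))"
proof -
  define v :: "real^'n" where "v = (\<chi> i. W $ i $ i)"
  define one :: "real^'n" where "one = (\<chi> i. 1)"
  have "trace W = v \<bullet> one" by (simp add: trace_def v_def one_def inner_vec_def)
  also have "\<dots> \<le> norm v * norm one" by (rule norm_cauchy_schwarz)
  also have "norm one = sqrt (real CARD('n))" by (simp add: norm_eq_sqrt_inner one_def inner_vec_def)
  finally have tr: "trace W \<le> norm v * sqrt (real CARD('n))" .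
  have nv: "norm v \<le> 1"
  proof -
    have "v \<bullet> v = (\<Sum>i\<in>UNIV. W $ i $ i * W $ i $ i)" by (simp add: v_def inner_vec_def)
    also have "\<dots> \<le> (\<Sum>i\<in>UNIV. \<Sum>j\<in>UNIV. W $ i $ j * W $ i $ j)"
    proof (rule sum_mono)
      fix i show "W $ i $ i * W $ i $ i \<le> (\<Sum>j\<in>UNIV. W $ i $ j * W $ i $ j)"
        by (rule member_le_sum) auto
    qed
    also have "\<dots> = W \<bullet> W" by (simp add: inner_vec_def)
    also have "W \<bullet> W \<le> 1" using assms by (simp add: power2_norm_eq_inner[symmetric] power_le_one)
    finally show ?thesis by (simp add: norm_eq_sqrt_inner)
  qed
  have h: "norm v * sqrt (real CARD('n)) \<le> 1 * sqrt (real CARD('n))"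
    using nv by (intro mult_right_mono) auto
  show ?thesis using tr h by linarith
qed

lemma posdef_inv_bound:
  fixes A :: "real^'n^'n"
  assumes sA: "transpose A = A" and c: "c > 0" and Apos: "\<And>x. c * (x \<bullet> x) \<le> x \<bullet> (A *v x)"
  shows "x \<bullet> (matrix_inv A *v x) \<le> (1/c) * (x \<bullet> x)"
proof -
  have iA: "invertible A" using det_pos[OF sA c Apos] by simp
  have iC: "invertible (c *\<^sub>R mat 1 :: real^'n^'n)"
    using inv_unique(2)[of "(1/c) *\<^sub>R mat 1" "c *\<^sub>R mat 1"] c
    by (simp add: matrix_scalar_ac scalar_matrix_assoc[symmetric])
  have "x \<bullet> (matrix_inv A *v x) \<le> x \<bullet> (matrix_inv (c *\<^sub>R mat 1 :: real^'n^'n) *v x)"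
  proof (rule loewner_inv[OF _ sA iC iA])
    show "transpose (c *\<^sub>R mat 1 :: real^'n^'n) = c *\<^sub>R mat 1" by (simp add: transpose_scalar)
    fix y show "0 \<le> y \<bullet> ((c *\<^sub>R mat 1 :: real^'n^'n) *v y)" using c by (simp add: quad_scaleI)
    show "y \<bullet> ((c *\<^sub>R mat 1 :: real^'n^'n) *v y) \<le> y \<bullet> (A *v y)" using Apos by (simp add: quad_scaleI)
  qed
  also have "\<dots> = (1/c) * (x \<bullet> x)" using c by (simp add: inv_scaleI quad_scaleI)
  finally show ?thesis .
qed

definition stopP :: "(real^'n^'n \<Rightarrow> 'z) \<Rightarrow> (('z \<Rightarrow> real) \<Rightarrow> real^'n^'n) \<Rightarrow> real \<Rightarrow> real
    \<Rightarrow> ('z \<Rightarrow> real) \<Rightarrow> bool" where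
  "stopP LinOpt LinEst C g P \<longleftrightarrow>
     trace (matrix_inv (fw_M LinEst g P) ** LinEst (delta (fw_zt LinOpt LinEst g P))) \<le> (1 + C) * real CARD('n)"

lemma fw_stop_P: "fw_stop LinOpt LinEst C g t = stopP LinOpt LinEst C g (fw_P LinOpt LinEst C g t)"
  by (simp add: fw_stop_def stopP_def Let_def)

locale fwset =
  fixes W :: "'z \<Rightarrow> real^'n^'n"
    and LinOpt :: "real^'n^'n \<Rightarrow> 'z"
    and LinEst :: "('z \<Rightarrow> real) \<Rightarrow> real^'n^'n"
    and Zref Zsupp :: "'z set"
    and C g :: real
  assumes W_psd: "\<forall>z. psd (W z)"
    and W_norm: "\<forall>z. norm (W z) \<le> 1"
    and C1: "1 < C" and C2: "C \<le> 2"
    and g0: "0 < g" and g1: "g < 1"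
    and gC: "g * C < 5 / 2"
    and approx: "approx_assumption W LinOpt LinEst Zref Zsupp (C * g / 5) (C * g^2 / 10)"
begin

definition "eps = C * g^2 / 10"
definition "kap = C * g / 10"

lemma eps_kap: "eps = kap * g" by (simp add: eps_def kap_def power2_eq_square)
lemma kap0: "kap > 0" using C1 g0 by (simp add: kap_def)

lemma Wsym: "transpose (W z) = W z" using W_psd by (simp add: psd_def)
lemma Wnn: "0 \<le> x \<bullet> (W z *v x)" using W_psd by (simp add: psd_def)

lemma LinOpt_in: "LinOpt M \<in> Zsupp" using approx by (simp add: approx_assumption_def)

lemma LinEst_psd: "is_fdist P Zsupp \<Longrightarrow> psd (LinEst P)"
  using approx by (simp add: approx_assumption_def)

lemma LinEst_err: "is_fdist P Zsupp \<Longrightarrow> \<bar>x \<bullet> ((LinEst P - expW W P) *v x)\<bar> \<le> eps * (x \<bullet> x)"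
  using approx op_norm_quad unfolding approx_assumption_def eps_def by blast

lemma LinOpt_prop:
  assumes "psd M" "M \<noteq> 0" "z \<in> Zref"
  shows "trace (M ** W z) \<le> trace (M ** W (LinOpt ((1 / norm M) *\<^sub>R M))) + (C * g / 5) * norm M"
  using approx assms unfolding approx_assumption_def by blast

lemma E_facts:
  assumes "is_fdist P Zsupp"
  shows "transpose (expW W P) = expW W P" "0 \<le> x \<bullet> (expW W P *v x)" "norm (expW W P) \<le> 1"
proof -
  show "transpose (expW W P) = expW W P" using assms expW_sym[OF _ Wsym] by (auto simp: is_fdist_def)
  show "0 \<le> x \<bullet> (expW W P *v x)" by (rule expW_nn[OF assms Wnn])
  show "norm (expW W P) \<le> 1" using expW_norm[OF assms, of W] W_norm by blast
qed

lemma gI_sym: "transpose (g *\<^sub>R mat 1 + X) = g *\<^sub>R mat 1 + X" if "transpose X = X" for X :: "real^'n^'n"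
  using that by (simp add: transpose_add transpose_scalar)

lemma gI_pos: "g * (x \<bullet> x) \<le> x \<bullet> ((g *\<^sub>R mat 1 + X) *v x)" if "0 \<le> x \<bullet> (X *v x)" for X :: "real^'n^'n"
  using that by (simp add: quad_add quad_scaleI)

lemma M_vs_A:
  assumes P: "is_fdist P Zsupp"
  shows "x \<bullet> ((g *\<^sub>R mat 1 + expW W P) *v x) \<le> (1 + kap) * (x \<bullet> ((g *\<^sub>R mat 1 + LinEst P) *v x))"
    "x \<bullet> ((g *\<^sub>R mat 1 + LinEst P) *v x) \<le> (1 + kap) * (x \<bullet> ((g *\<^sub>R mat 1 + expW W P) *v x))"
proof -
  have err: "\<bar>x \<bullet> (LinEst P *v x) - x \<bullet> (expW W P *v x)\<bar> \<le> eps * (x \<bullet> x)"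
    using LinEst_err[OF P, of x] by (simp add: quad_diff)
  have Lnn: "0 \<le> x \<bullet> (LinEst P *v x)" using LinEst_psd[OF P] by (simp add: psd_def)
  have Enn: "0 \<le> x \<bullet> (expW W P *v x)" using E_facts(2)[OF P] .
  have xx: "0 \<le> x \<bullet> x" by simp
  have ek: "eps * (x \<bullet> x) = kap * (g * (x \<bullet> x))" by (simp add: eps_kap)
  have k0: "0 \<le> kap" using kap0 by simp
  have h1: "kap * (g * (x \<bullet> x)) \<le> kap * (g * (x \<bullet> x) + x \<bullet> (LinEst P *v x))"
    using k0 Lnn by (intro mult_left_mono) auto
  have h2: "kap * (g * (x \<bullet> x)) \<le> kap * (g * (x \<bullet> x) + x \<bullet> (expW W P *v x))"
    using k0 Enn by (intro mult_left_mono) auto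
  have e1: "x \<bullet> ((g *\<^sub>R mat 1 + expW W P) *v x) = g * (x \<bullet> x) + x \<bullet> (expW W P *v x)"
    by (simp add: quad_add quad_scaleI)
  have e2: "x \<bullet> ((g *\<^sub>R mat 1 + LinEst P) *v x) = g * (x \<bullet> x) + x \<bullet> (LinEst P *v x)"
    by (simp add: quad_add quad_scaleI)
  have e3: "(1 + kap) * (g * (x \<bullet> x) + y) = (g * (x \<bullet> x) + y) + kap * (g * (x \<bullet> x) + y)" for y
    by (simp add: algebra_simps)
  show "x \<bullet> ((g *\<^sub>R mat 1 + expW W P) *v x) \<le> (1 + kap) * (x \<bullet> ((g *\<^sub>R mat 1 + LinEst P) *v x))"
    unfolding e1 e2 e3 using err ek h1 by linarith
  show "x \<bullet> ((g *\<^sub>R mat 1 + LinEst P) *v x) \<le> (1 + kap) * (x \<bullet> ((g *\<^sub>R mat 1 + expW W P) *v x))"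
    unfolding e1 e2 e3 using err ek h2 by linarith
qed

end

lemma loewner_inv_scaled:
  fixes A B :: "real^'n^'n"
  assumes sA: "transpose A = A" and sB: "transpose B = B" and c: "c > 0"
    and Apos: "\<And>x. c * (x \<bullet> x) \<le> x \<bullet> (A *v x)"
    and Bpos: "\<And>x. c * (x \<bullet> x) \<le> x \<bullet> (B *v x)"
    and k: "k > 0"
    and BA: "\<And>x. x \<bullet> (B *v x) \<le> k * (x \<bullet> (A *v x))"
  shows "x \<bullet> (matrix_inv A *v x) \<le> k * (x \<bullet> (matrix_inv B *v x))"
proof -
  have iA: "invertible A" using det_pos[OF sA c Apos] by simp
  have iB: "invertible B" using det_pos[OF sB c Bpos] by simp
  have ikA: "invertible (k *\<^sub>R A)"
    using inv_unique(2)[of "(1/k) *\<^sub>R matrix_inv A" "k *\<^sub>R A"] inv_props(2)[OF iA] k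
    by (simp add: matrix_scalar_ac scalar_matrix_assoc[symmetric])
  have "x \<bullet> (matrix_inv (k *\<^sub>R A) *v x) \<le> x \<bullet> (matrix_inv B *v x)"
  proof (rule loewner_inv[OF sB _ iB ikA])
    show "transpose (k *\<^sub>R A) = k *\<^sub>R A" using sA by (simp add: transpose_scalar)
    fix y
    show "0 \<le> y \<bullet> (B *v y)" using Bpos[of y] c by (smt (verit) inner_ge_zero mult_nonneg_nonneg)
    show "y \<bullet> (B *v y) \<le> y \<bullet> ((k *\<^sub>R A) *v y)" using BA[of y] by (simp add: quad_scale)
  qed
  hence "(1/k) * (x \<bullet> (matrix_inv A *v x)) \<le> x \<bullet> (matrix_inv B *v x)"
    using k by (simp add: inv_scale[OF iA] quad_scale)
  thus ?thesis using k by (simp add: field_simps)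
qed

lemma transpose_diff: "transpose ((A::real^'n^'m) - B) = transpose A - transpose B"
  by (simp add: transpose_def vec_eq_iff)

lemma quad_mult: "x \<bullet> ((A ** B) *v x) = x \<bullet> (A *v (B *v (x::real^'n)))"
  by (simp add: matrix_vector_mul_assoc)

context fwset
begin

lemma mats:
  assumes P: "is_fdist P Zsupp"
  defines "M \<equiv> g *\<^sub>R mat 1 + LinEst P" and "A \<equiv> g *\<^sub>R mat 1 + expW W P"
  shows "transpose M = M" "\<And>x. g * (x \<bullet> x) \<le> x \<bullet> (M *v x)"
    "transpose A = A" "\<And>x. g * (x \<bullet> x) \<le> x \<bullet> (A *v x)"
    "invertible M" "invertible A"
    "transpose (matrix_inv M) = matrix_inv M" "transpose (matrix_inv A) = matrix_inv A"
    "\<And>x. 0 \<le> x \<bullet> (matrix_inv M *v x)" "\<And>x. 0 \<le> x \<bullet> (matrix_inv A *v x)"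
    "\<And>x. x \<bullet> (matrix_inv M *v x) \<le> (1/g) * (x \<bullet> x)"
    "\<And>x. x \<bullet> (matrix_inv A *v x) \<le> (1/g) * (x \<bullet> x)"
    "\<And>x. x \<bullet> (matrix_inv A *v x) \<le> (1 + kap) * (x \<bullet> (matrix_inv M *v x))"
    "\<And>x. x \<bullet> (matrix_inv M *v x) \<le> (1 + kap) * (x \<bullet> (matrix_inv A *v x))"
proof -
  have Lp: "psd (LinEst P)" by (rule LinEst_psd[OF P])
  show sM: "transpose M = M" unfolding M_def using Lp by (intro gI_sym) (simp add: psd_def)
  show pM: "\<And>x. g * (x \<bullet> x) \<le> x \<bullet> (M *v x)" unfolding M_def using Lp by (intro gI_pos) (simp add: psd_def)
  show sA: "transpose A = A" unfolding A_def using E_facts[OF P] by (intro gI_sym) simp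
  show pA: "\<And>x. g * (x \<bullet> x) \<le> x \<bullet> (A *v x)" unfolding A_def using E_facts[OF P] by (intro gI_pos) simp
  show iM: "invertible M" using det_pos[OF sM g0 pM] by simp
  show iA: "invertible A" using det_pos[OF sA g0 pA] by simp
  show "transpose (matrix_inv M) = matrix_inv M" by (rule inv_sym[OF sM iM])
  show "transpose (matrix_inv A) = matrix_inv A" by (rule inv_sym[OF sA iA])
  have nM: "\<And>x. 0 \<le> x \<bullet> (M *v x)" using pM g0 by (smt (verit) inner_ge_zero mult_nonneg_nonneg)
  have nA: "\<And>x. 0 \<le> x \<bullet> (A *v x)" using pA g0 by (smt (verit) inner_ge_zero mult_nonneg_nonneg)
  show "\<And>x. 0 \<le> x \<bullet> (matrix_inv M *v x)" by (rule inv_nonneg[OF sM iM nM])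
  show "\<And>x. 0 \<le> x \<bullet> (matrix_inv A *v x)" by (rule inv_nonneg[OF sA iA nA])
  show "\<And>x. x \<bullet> (matrix_inv M *v x) \<le> (1/g) * (x \<bullet> x)" by (rule posdef_inv_bound[OF sM g0 pM])
  show "\<And>x. x \<bullet> (matrix_inv A *v x) \<le> (1/g) * (x \<bullet> x)" by (rule posdef_inv_bound[OF sA g0 pA])
  have k: "1 + kap > 0" using kap0 by simp
  show "\<And>x. x \<bullet> (matrix_inv A *v x) \<le> (1 + kap) * (x \<bullet> (matrix_inv M *v x))"
    by (rule loewner_inv_scaled[OF sA sM g0 pA pM k]) (use M_vs_A(2)[OF P] in \<open>simp add: M_def A_def\<close>)
  show "\<And>x. x \<bullet> (matrix_inv M *v x) \<le> (1 + kap) * (x \<bullet> (matrix_inv A *v x))"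
    by (rule loewner_inv_scaled[OF sM sA g0 pM pA k]) (use M_vs_A(1)[OF P] in \<open>simp add: M_def A_def\<close>)
qed

end

lemma trace_le_scaled:
  fixes X Y :: "real^'n^'n"
  assumes "\<And>x. x \<bullet> (X *v x) \<le> k * (x \<bullet> (Y *v x))"
    and "transpose W = W" "\<And>x. 0 \<le> x \<bullet> (W *v x)"
  shows "trace (X ** W) \<le> k * trace (Y ** W)"
proof -
  have "trace (X ** W) \<le> trace ((k *\<^sub>R Y) ** W)"
    by (rule trace_mono_prod[OF _ assms(2,3)]) (use assms(1) in \<open>simp add: quad_scale\<close>)
  thus ?thesis by (simp add: scalar_matrix_assoc[symmetric] trace_scale)
qed

lemma trace_le_scaledI:
  fixes X :: "real^'n^'n"
  assumes "\<And>x. x \<bullet> (X *v x) \<le> k * (x \<bullet> x)"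
    and "transpose W = W" "\<And>x. 0 \<le> x \<bullet> (W *v x)"
  shows "trace (X ** W) \<le> k * trace W"
  using trace_le_scaled[of X k "mat 1" W] assms by simp

lemma trace_le_I:
  fixes X :: "real^'n^'n"
  assumes "\<And>x. x \<bullet> (X *v x) \<le> k * (x \<bullet> x)"
  shows "trace X \<le> k * real CARD('n)"
proof -
  have "trace X \<le> trace (k *\<^sub>R (mat 1 :: real^'n^'n))"
    by (rule trace_mono) (use assms in \<open>simp add: quad_scaleI\<close>)
  thus ?thesis by (simp add: trace_scale trace_mat1)
qed

lemma trace_mult_add_I:
  fixes X W :: "real^'n^'n"
  shows "trace ((X + e *\<^sub>R mat 1) ** W) = trace (X ** W) + e * trace W"
  by (simp add: mm_add_r trace_add scalar_matrix_assoc[symmetric] trace_scale)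

context fwset
begin

lemma zt_facts:
  assumes P: "is_fdist P Zsupp"
  defines "zt \<equiv> fw_zt LinOpt LinEst g P"
  shows "zt \<in> Zsupp" "is_fdist (delta zt) Zsupp"
    "transpose (LinEst (delta zt)) = LinEst (delta zt)" "\<And>x. 0 \<le> x \<bullet> (LinEst (delta zt) *v x)"
    "\<And>x. x \<bullet> (LinEst (delta zt) *v x) \<le> x \<bullet> (W zt *v x) + eps * (x \<bullet> x)"
    "\<And>x. x \<bullet> (W zt *v x) \<le> x \<bullet> (LinEst (delta zt) *v x) + eps * (x \<bullet> x)"
proof -
  show zS: "zt \<in> Zsupp" unfolding zt_def fw_zt_def Let_def by (rule LinOpt_in)
  show dv: "is_fdist (delta zt) Zsupp" by (rule fdist_delta[OF zS])
  have ps: "psd (LinEst (delta zt))" by (rule LinEst_psd[OF dv])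
  thus "transpose (LinEst (delta zt)) = LinEst (delta zt)" "\<And>x. 0 \<le> x \<bullet> (LinEst (delta zt) *v x)"
    by (auto simp: psd_def)
  fix x
  have "\<bar>x \<bullet> ((LinEst (delta zt) - W zt) *v x)\<bar> \<le> eps * (x \<bullet> x)"
    using LinEst_err[OF dv, of x] by (simp add: expW_delta)
  thus "x \<bullet> (LinEst (delta zt) *v x) \<le> x \<bullet> (W zt *v x) + eps * (x \<bullet> x)"
    "x \<bullet> (W zt *v x) \<le> x \<bullet> (LinEst (delta zt) *v x) + eps * (x \<bullet> x)"
    by (simp_all add: quad_diff abs_le_iff)
qed

lemma trace_W_le: "trace (W z) \<le> sqrt (real CARD('n))"
  using W_norm trace_le_sqrt by blast

lemma nonstop_small:
  assumes P: "is_fdist P Zsupp" and ns: "\<not> stopP LinOpt LinEst C g P"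
  shows "g * sqrt (real CARD('n)) * (1 + 9 * C / 10) < 1"
proof -
  define zt where "zt = fw_zt LinOpt LinEst g P"
  define Wt where "Wt = LinEst (delta zt)"
  define M where "M = g *\<^sub>R mat 1 + LinEst P"
  define s where "s = sqrt (real CARD('n))"
  have s1: "s \<ge> 1" by (simp add: s_def)
  have ss: "s * s = real CARD('n)" by (simp add: s_def)
  have a1: "(1 + C) * real CARD('n) < trace (matrix_inv M ** Wt)"
    using ns unfolding stopP_def M_def fw_M_def Wt_def zt_def by simp
  have a2: "trace (matrix_inv M ** Wt) \<le> (1/g) * trace Wt"
    by (rule trace_le_scaledI) (use mats(11)[OF P] zt_facts[OF P] in \<open>simp_all add: M_def Wt_def zt_def\<close>)
  have a3: "trace Wt \<le> trace (W zt + eps *\<^sub>R mat 1)"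
    by (rule trace_mono) (use zt_facts(5)[OF P] in \<open>simp add: quad_add quad_scaleI Wt_def zt_def\<close>)
  have a4: "trace (W zt + eps *\<^sub>R mat 1) \<le> s + eps * real CARD('n)"
    using trace_W_le[of zt] by (simp add: trace_add trace_scale trace_mat1 s_def)
  have "(1/g) * trace Wt \<le> (1/g) * (s + eps * real CARD('n))"
    using a3 a4 g0 by (intro mult_left_mono) auto
  with a1 a2 have "(1 + C) * real CARD('n) < (1/g) * (s + eps * real CARD('n))" by linarith
  hence h: "(1 + C) * (s * s) * g < s + eps * (s * s)" using g0 by (simp add: ss field_simps)
  have "eps * (s * s) \<le> C * g / 10 * (s * s)"
    unfolding eps_def using g0 g1 C1 by (intro mult_right_mono) (auto simp: power2_eq_square)
  with h have "(1 + C) * (s * s) * g - C * g / 10 * (s * s) < s" by linarith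
  hence "s * (s * g * (1 + 9 * C / 10)) < s * 1" by (simp add: algebra_simps)
  hence "s * g * (1 + 9 * C / 10) < 1" using s1 by (simp add: mult_less_cancel_left)
  thus ?thesis by (simp add: s_def mult_ac)
qed

end

lemma H_bound:
  fixes Ai Wz E :: "real^'n^'n"
  assumes sAi: "transpose Ai = Ai" and Ail: "\<And>x. x \<bullet> (Ai *v x) \<le> (1/g) * (x \<bullet> x)" and g: "g > 0"
    and sW: "transpose Wz = Wz" and Wn: "\<And>x. 0 \<le> x \<bullet> (Wz *v x)" and nW: "norm Wz \<le> 1"
    and sE: "transpose E = E" and En: "\<And>x. 0 \<le> x \<bullet> (E *v x)" and nE: "norm E \<le> 1"
    and Ain: "\<And>x. 0 \<le> x \<bullet> (Ai *v x)"
  shows "trace ((Wz - E) ** Ai ** (Wz - E) ** Ai) \<le> 2 / g^2"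
proof -
  define D where "D = Wz - E"
  have sD: "transpose D = D" unfolding D_def using sW sE by (simp add: transpose_diff)
  define K where "K = D ** Ai ** D"
  have sK: "transpose K = K" unfolding K_def using sD sAi by (simp add: matrix_transpose_mul matrix_mul_assoc)
  have nK: "0 \<le> x \<bullet> (K *v x)" for x
  proof -
    have "x \<bullet> (K *v x) = x \<bullet> (D *v (Ai *v (D *v x)))" by (simp only: K_def matrix_vector_mul_assoc matrix_mul_assoc)
    also have "\<dots> = (Ai *v (D *v x)) \<bullet> (D *v x)" by (rule symm_inner[OF sD])
    also have "\<dots> = (D *v x) \<bullet> (Ai *v (D *v x))" by (rule inner_commute)
    finally show ?thesis using Ain by simp
  qed
  have sDD: "transpose (D ** D) = D ** D" using sD by (simp add: matrix_transpose_mul)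
  have nDD: "0 \<le> x \<bullet> ((D ** D) *v x)" for x
  proof -
    have "x \<bullet> ((D ** D) *v x) = x \<bullet> (D *v (D *v x))" by (simp add: matrix_vector_mul_assoc)
    also have "\<dots> = (D *v x) \<bullet> (D *v x)" by (rule symm_inner[OF sD])
    finally show ?thesis by simp
  qed
  have "trace (D ** Ai ** D ** Ai) = trace (K ** Ai)" by (simp add: K_def)
  also have "\<dots> = trace (Ai ** K)" by (rule trace_mul_sym)
  also have "\<dots> \<le> (1/g) * trace K" by (rule trace_le_scaledI[OF Ail sK nK])
  finally have h1: "trace (D ** Ai ** D ** Ai) \<le> (1/g) * trace K" .
  have "trace K = trace (D ** (Ai ** D))" by (simp add: K_def matrix_mul_assoc)
  also have "\<dots> = trace ((Ai ** D) ** D)" by (rule trace_mul_sym)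
  also have "\<dots> = trace (Ai ** (D ** D))" by (simp add: matrix_mul_assoc)
  also have "\<dots> \<le> (1/g) * trace (D ** D)" by (rule trace_le_scaledI[OF Ail sDD nDD])
  finally have h2: "trace K \<le> (1/g) * trace (D ** D)" .
  have "trace (D ** D) = trace (Wz ** Wz) - trace (Wz ** E) - trace (E ** Wz) + trace (E ** E)"
    by (simp add: D_def mm_diff_l mm_diff_r trace_sub trace_add)
  moreover have "trace (Wz ** Wz) \<le> 1" using frob_sq[OF sW] nW by (simp add: power_le_one)
  moreover have "trace (E ** E) \<le> 1" using frob_sq[OF sE] nE by (simp add: power_le_one)
  moreover have "0 \<le> trace (Wz ** E)" by (rule trace_prod_nonneg[OF Wn sE En])
  moreover have "0 \<le> trace (E ** Wz)" by (rule trace_prod_nonneg[OF En sW Wn])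
  ultimately have h3: "trace (D ** D) \<le> 2" by linarith
  have "(1/g) * trace (D ** D) \<le> (1/g) * 2" using h3 g by (intro mult_left_mono) auto
  with h2 have h4: "trace K \<le> (1/g) * 2" by linarith
  have "(1/g) * trace K \<le> (1/g) * ((1/g) * 2)"
    using h4 g by (intro mult_left_mono) auto
  with h1 have "trace (D ** Ai ** D ** Ai) \<le> (1/g) * ((1/g) * 2)" by linarith
  thus ?thesis by (simp add: D_def power2_eq_square)
qed

context fwset
begin

lemma gain:
  assumes P: "is_fdist P Zsupp" and ns: "\<not> stopP LinOpt LinEst C g P"
  defines "m \<equiv> C * g^2 * real CARD('n) / 8"
  defines "P' \<equiv> (\<lambda>z. (1 - m) * P z + m * delta (fw_zt LinOpt LinEst g P) z)"
  shows "is_fdist P' Zsupp"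
    "ln (det (g *\<^sub>R mat 1 + expW W P)) + C^2 * g^2 * (real CARD('n))^2 / 16
       < ln (det (g *\<^sub>R mat 1 + expW W P'))"
proof -
  define d where "d = real CARD('n)"
  define zt where "zt = fw_zt LinOpt LinEst g P"
  define Wt where "Wt = LinEst (delta zt)"
  define Wz where "Wz = W zt"
  define E where "E = expW W P"
  define A where "A = g *\<^sub>R mat 1 + E"
  define M where "M = g *\<^sub>R mat 1 + LinEst P"
  define Ai where "Ai = matrix_inv A"
  define Mi where "Mi = matrix_inv M"
  define r where "r = g * sqrt d"
  have d1: "d \<ge> 1" by (simp add: d_def)
  have r1: "r * (1 + 9 * C / 10) < 1" using nonstop_small[OF P ns] by (simp add: r_def d_def)
  have gr: "g \<le> r" unfolding r_def using g0 d1 by (simp add: mult_le_cancel_left1)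
  have "g * (1 + 9 * C / 10) \<le> r * (1 + 9 * C / 10)" using gr C1 by (intro mult_right_mono) auto
  with r1 have k1: "g * (1 + 9 * C / 10) < 1" by linarith
  have r0: "r \<ge> 0" using g0 d1 by (simp add: r_def)
  have "r * 1 \<le> r * (1 + 9 * C / 10)" using r0 C1 by (intro mult_left_mono) auto
  with r1 have rlt1: "r < 1" by linarith
  have mr: "m = C * r^2 / 8" using d1 by (simp add: m_def r_def d_def power_mult_distrib)
  have m0: "0 < m" using C1 g0 by (simp add: m_def)
  have m1: "m \<le> 1/2"
  proof -
    have "r^2 \<le> 1" using rlt1 r0 by (simp add: power_le_one)
    hence "C * r^2 \<le> C * 1" using C1 by (intro mult_left_mono) auto
    thus ?thesis using C2 mr by simp
  qed
  have zS: "zt \<in> Zsupp" using zt_facts(1)[OF P] by (simp add: zt_def)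
  show vP': "is_fdist P' Zsupp" unfolding P'_def zt_def[symmetric]
    by (rule fdist_mix[OF P zS]) (use m0 m1 in auto)
  note MA = mats[OF P, folded M_def E_def, folded A_def, folded Mi_def Ai_def]
  note ZF = zt_facts[OF P, folded zt_def, folded Wt_def]
  have sWz: "transpose Wz = Wz" and nWz: "\<And>x. 0 \<le> x \<bullet> (Wz *v x)" and normWz: "norm Wz \<le> 1"
    using Wsym Wnn W_norm by (auto simp: Wz_def)
  have sE: "transpose E = E" and nE: "\<And>x. 0 \<le> x \<bullet> (E *v x)" and normE: "norm E \<le> 1"
    using E_facts[OF P] by (auto simp: E_def)
  define tA where "tA = trace (Ai ** Wz)"
  have t1: "trace ((Wz - E) ** Ai) = tA - trace (Ai ** E)"
    by (simp add: tA_def trace_mul_sym[of "Wz - E"] mm_diff_l trace_sub)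
  have t2: "trace (Ai ** E) \<le> d"
  proof -
    have "Ai ** A = mat 1" using inv_props(2)[OF MA(6)] by (simp add: Ai_def)
    hence "Ai ** (g *\<^sub>R mat 1) + Ai ** E = mat 1" by (simp add: A_def matrix_add_ldistrib)
    hence "g * trace Ai + trace (Ai ** E) = d"
      by (metis d_def trace_add trace_mat1 matrix_scalar_ac matrix_mul_rid trace_scale)
    moreover have "trace Ai \<ge> 0" by (rule trace_nonneg) (rule MA(10))
    ultimately show ?thesis using g0 by (smt (verit) mult_nonneg_nonneg)
  qed
  have t3: "trace (Mi ** Wz) \<le> (1 + kap) * tA"
    unfolding tA_def by (rule trace_le_scaled[OF MA(14) sWz nWz])
  have t4: "trace (Mi ** Wt) \<le> trace (Mi ** Wz) + eps * trace Mi"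
  proof -
    have "trace (Wt ** Mi) \<le> trace ((Wz + eps *\<^sub>R mat 1) ** Mi)"
      by (rule trace_mono_prod[OF _ MA(7) MA(9)])
        (use ZF(5) in \<open>simp add: quad_add quad_scaleI Wz_def\<close>)
    thus ?thesis by (simp add: trace_mult_add_I trace_mul_sym[of Mi])
  qed
  have t5: "trace Mi \<le> (1/g) * d" unfolding d_def by (rule trace_le_I[OF MA(11)])
  have t6: "(1 + C) * d < trace (Mi ** Wt)"
    using ns unfolding stopP_def Mi_def M_def fw_M_def Wt_def zt_def d_def by simp
  have epsd: "eps * trace Mi \<le> kap * d"
  proof -
    have "eps * trace Mi \<le> eps * ((1/g) * d)" using t5 C1 g0 by (intro mult_left_mono) (auto simp: eps_def)
    also have "\<dots> = kap * d" using g0 by (simp add: eps_kap)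
    finally show ?thesis .
  qed
  have "(1 + C - kap) * d = (1 + C) * d - kap * d" by (simp add: algebra_simps)
  hence tA_big: "(1 + C - kap) * d < (1 + kap) * tA" using t3 t4 t6 epsd by linarith
  have k2: "(1 + 3 * C / 4) * (1 + kap) \<le> 1 + C - kap"
  proof -
    have "g * (8 + 3 * C) \<le> g * (10 + 9 * C)" using g0 C1 by (intro mult_left_mono) auto
    also have "\<dots> = 10 * (g * (1 + 9 * C / 10))" by (simp add: algebra_simps)
    also have "\<dots> \<le> 10" using k1 by simp
    finally have "g * (8 + 3 * C) \<le> 10" .
    hence "C * (g * (8 + 3 * C)) \<le> C * 10" using C1 by (intro mult_left_mono) auto
    thus ?thesis by (simp add: kap_def algebra_simps)
  qed
  have tA2: "(1 + 3 * C / 4) * d < tA"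
  proof -
    have "(1 + 3 * C / 4) * (1 + kap) * d \<le> (1 + C - kap) * d" using k2 d1 by (intro mult_right_mono) auto
    with tA_big have "(1 + kap) * ((1 + 3 * C / 4) * d) < (1 + kap) * tA" by (simp add: mult_ac)
    thus ?thesis using kap0 by (smt (verit) mult_le_cancel_left)
  qed
  define G where "G = trace ((Wz - E) ** Ai)"
  have G1: "3 * C / 4 * d < G" using t1 t2 tA2 unfolding G_def by (simp add: algebra_simps)
  define H where "H = trace ((Wz - E) ** Ai ** (Wz - E) ** Ai)"
  have H1: "H \<le> 2 / g^2"
    unfolding H_def by (rule H_bound[OF MA(8) MA(12) g0 sWz nWz normWz sE nE normE MA(10)])
  have sD: "transpose (Wz - E) = Wz - E" using sWz sE by (simp add: transpose_diff)
  have ADnn: "0 \<le> x \<bullet> ((A + (Wz - E)) *v x)" for x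
  proof -
    have "x \<bullet> ((A + (Wz - E)) *v x) = g * (x \<bullet> x) + x \<bullet> (Wz *v x)"
      by (simp add: A_def quad_add quad_diff quad_scaleI)
    thus ?thesis using g0 nWz[of x] by (simp add: add_nonneg_nonneg)
  qed
  have step: "ln (det A) + m * G - m^2 * H \<le> ln (det (A + m *\<^sub>R (Wz - E)))"
    unfolding G_def H_def Ai_def
    by (rule logdet_step[OF MA(3) sD g0 MA(4) ADnn]) (use m0 m1 in auto)
  have AP': "A + m *\<^sub>R (Wz - E) = g *\<^sub>R mat 1 + expW W P'"
  proof -
    have fs: "finite (fsupp P)" using P by (simp add: is_fdist_def)
    have "expW W P' = (1 - m) *\<^sub>R E + m *\<^sub>R Wz"
      unfolding P'_def E_def Wz_def zt_def by (rule expW_mix[OF fs])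
    thus ?thesis by (simp add: A_def algebra_simps)
  qed
  have a1: "m * (3 * C / 4 * d) < m * G" using G1 m0 by simp
  have a2: "m^2 * H \<le> m^2 * (2 / g^2)" using H1 by (intro mult_left_mono) auto
  have a3: "m * (3 * C / 4 * d) = 3 * (C^2 * g^2 * d^2 / 16) / 2"
    by (simp add: m_def d_def power2_eq_square)
  have a4: "m^2 * (2 / g^2) = (C^2 * g^2 * d^2 / 16) / 2"
    using g0 by (simp add: m_def d_def power2_eq_square)
  have "ln (det A) + C^2 * g^2 * d^2 / 16 < ln (det A) + m * G - m^2 * H"
    using a1 a2 a3 a4 by linarith
  moreover have "ln (det A) + m * G - m^2 * H \<le> ln (det (g *\<^sub>R mat 1 + expW W P'))"
    using step unfolding AP' .
  ultimately have fin: "ln (det A) + C^2 * g^2 * d^2 / 16 < ln (det (g *\<^sub>R mat 1 + expW W P'))"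
    by linarith
  thus "ln (det (g *\<^sub>R mat 1 + expW W P)) + C^2 * g^2 * (real CARD('n))^2 / 16
       < ln (det (g *\<^sub>R mat 1 + expW W P'))"
    unfolding A_def E_def d_def .
qed

end

lemma mat1_ne0: "(mat 1 :: real^'n^'n) \<noteq> 0"
proof
  assume "(mat 1 :: real^'n^'n) = 0"
  hence "(mat 1 :: real^'n^'n) $ undefined $ undefined = 0" by simp
  thus False by (simp add: mat_def)
qed

context fwset
begin

lemma final_bound:
  assumes P: "is_fdist P Zsupp" and st: "stopP LinOpt LinEst C g P" and zR: "z \<in> Zref"
  shows "trace (matrix_inv (g *\<^sub>R mat 1 + expW W P) ** W z) \<le> (1 + 3 * C / 2) * real CARD('n)"
proof -
  define d where "d = real CARD('n)"
  define s where "s = sqrt d"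
  define zt where "zt = fw_zt LinOpt LinEst g P"
  define Wt where "Wt = LinEst (delta zt)"
  define E where "E = expW W P"
  define A where "A = g *\<^sub>R mat 1 + E"
  define M where "M = g *\<^sub>R mat 1 + LinEst P"
  define Ai where "Ai = matrix_inv A"
  define Mi where "Mi = matrix_inv M"
  define r where "r = g * s"
  have d1: "d \<ge> 1" by (simp add: d_def)
  have s1: "s \<ge> 1" using d1 by (simp add: s_def)
  have ss: "s * s = d" using d1 by (simp add: s_def)
  have "s * 1 \<le> s * s" using s1 by (intro mult_left_mono) auto
  hence sd: "s \<le> d" using ss by simp
  note MA = mats[OF P, folded M_def E_def, folded A_def, folded Mi_def Ai_def]
  note ZF = zt_facts[OF P, folded zt_def, folded Wt_def]
  have trWz: "trace (W z) \<le> s" using trace_W_le[of z] by (simp add: s_def d_def)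
  show ?thesis
  proof (cases "1 \<le> r * (1 + 3 * C / 2)")
    case True
    have "trace (Ai ** W z) \<le> (1/g) * trace (W z)" by (rule trace_le_scaledI[OF MA(12) Wsym Wnn])
    also have "\<dots> \<le> (1/g) * s" using trWz g0 by (intro mult_left_mono) auto
    also have "\<dots> \<le> (1 + 3 * C / 2) * d"
    proof -
      have "s * 1 \<le> s * (r * (1 + 3 * C / 2))" using True s1 by (intro mult_left_mono) auto
      also have "\<dots> = g * ((1 + 3 * C / 2) * d)" unfolding r_def ss[symmetric] by (simp only: mult_ac)
      finally have "s \<le> g * ((1 + 3 * C / 2) * d)" by simp
      thus ?thesis using g0 by (simp add: pos_divide_le_eq mult.commute)
    qed
    finally show ?thesis by (simp add: Ai_def A_def E_def d_def)
  next
    case False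
    have gr: "g \<le> r" unfolding r_def using g0 s1 by (simp add: mult_le_cancel_left1)
    have "g * (1 + 3 * C / 2) \<le> r * (1 + 3 * C / 2)" using gr C1 by (intro mult_right_mono) auto
    with False have k1: "g * (1 + 3 * C / 2) < 1" by linarith
    have kap15: "kap \<le> 1/15"
    proof -
      have "C * g \<le> 2/3 * (g * (1 + 3 * C / 2))" using g0 by (simp add: algebra_simps)
      also have "\<dots> \<le> 2/3" using k1 by simp
      finally show ?thesis by (simp add: kap_def)
    qed
    have b1: "trace (Ai ** W z) \<le> (1 + kap) * trace (Mi ** W z)"
      by (rule trace_le_scaled[OF MA(13) Wsym Wnn])
    have psdMi: "psd Mi" using MA(7) MA(9) by (simp add: psd_def)
    have Mi0: "Mi \<noteq> 0"
    proof
      assume "Mi = 0"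
      hence "Mi ** M = 0" by simp
      moreover have "Mi ** M = mat 1" using inv_props(2)[OF MA(5)] by (simp add: Mi_def)
      ultimately have "(mat 1 :: real^'n^'n) = 0" by simp
      thus False using mat1_ne0 by blast
    qed
    have ztdef: "zt = LinOpt ((1 / norm Mi) *\<^sub>R Mi)"
      by (simp add: zt_def fw_zt_def Let_def Mi_def M_def fw_M_def)
    have b2: "trace (Mi ** W z) \<le> trace (Mi ** W zt) + (C * g / 5) * norm Mi"
      using LinOpt_prop[OF psdMi Mi0 zR] ztdef by simp
    have b3: "trace (Mi ** W zt) \<le> trace (Mi ** Wt) + eps * trace Mi"
    proof -
      have "trace (W zt ** Mi) \<le> trace ((Wt + eps *\<^sub>R mat 1) ** Mi)"
        by (rule trace_mono_prod[OF _ MA(7) MA(9)])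
          (use ZF(6) in \<open>simp add: quad_add quad_scaleI\<close>)
      thus ?thesis by (simp add: trace_mult_add_I trace_mul_sym[of Mi])
    qed
    have b4: "trace (Mi ** Wt) \<le> (1 + C) * d"
      using st unfolding stopP_def Mi_def M_def fw_M_def Wt_def zt_def d_def by simp
    have t5: "trace Mi \<le> (1/g) * d" unfolding d_def by (rule trace_le_I[OF MA(11)])
    have b5: "eps * trace Mi \<le> kap * d"
    proof -
      have "eps * trace Mi \<le> eps * ((1/g) * d)" using t5 C1 g0 by (intro mult_left_mono) (auto simp: eps_def)
      also have "\<dots> = kap * d" using g0 by (simp add: eps_kap)
      finally show ?thesis .
    qed
    have b6: "norm Mi \<le> s / g"
    proof -
      have "(norm Mi)^2 = trace (Mi ** Mi)" using frob_sq[OF MA(7)] by simp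
      also have "\<dots> \<le> (1/g) * trace Mi" by (rule trace_le_scaledI[OF MA(11) MA(7) MA(9)])
      also have "\<dots> \<le> (1/g) * ((1/g) * d)" using t5 g0 by (intro mult_left_mono) auto
      also have "\<dots> = (s / g)^2" using ss by (simp add: power2_eq_square)
      finally have h: "(norm Mi)^2 \<le> (s / g)^2" .
      show ?thesis by (rule power2_le_imp_le[OF h]) (use g0 s1 in simp)
    qed
    have b7: "(C * g / 5) * norm Mi \<le> C * d / 5"
    proof -
      have "(C * g / 5) * norm Mi \<le> (C * g / 5) * (s / g)" using b6 C1 g0 by (intro mult_left_mono) auto
      also have "\<dots> = C * s / 5" using g0 by simp
      also have "\<dots> \<le> C * d / 5" using sd C1 by simp
      finally show ?thesis .
    qed
    have c0: "trace (Mi ** W z) \<le> (1 + C) * d + kap * d + C * d / 5" using b2 b3 b4 b5 b7 by linarith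
    have "(1 + C) * d + kap * d + C * d / 5 = (1 + 6 * C / 5 + kap) * d" by (simp add: algebra_simps)
    with c0 have c2: "trace (Mi ** W z) \<le> (1 + 6 * C / 5 + kap) * d" by simp
    have c3: "(1 + kap) * trace (Mi ** W z) \<le> (1 + kap) * ((1 + 6 * C / 5 + kap) * d)"
      using kap0 c2 by (intro mult_left_mono) auto
    have c4: "(1 + kap) * (1 + 6 * C / 5 + kap) \<le> (1 + 1/15) * (1 + 6 * C / 5 + 1/15)"
      using kap15 kap0 C1 by (intro mult_mono) auto
    have c5: "(1 + 1/15) * (1 + 6 * C / 5 + 1/15) \<le> 1 + 3 * C / 2" using C1 by (simp add: algebra_simps)
    have c6: "((1 + kap) * (1 + 6 * C / 5 + kap)) * d \<le> (1 + 3 * C / 2) * d"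
      using c4 c5 d1 by (intro mult_right_mono) auto
    have c7: "(1 + kap) * ((1 + 6 * C / 5 + kap) * d) = ((1 + kap) * (1 + 6 * C / 5 + kap)) * d"
      by (rule mult.assoc[symmetric])
    have "trace (Ai ** W z) \<le> (1 + 3 * C / 2) * d" using b1 c3 c6 c7 by linarith
    thus ?thesis unfolding Ai_def A_def E_def d_def .
  qed
qed

end

context fwset
begin

abbreviation "Pk k \<equiv> fw_P LinOpt LinEst C g k"
definition "Phi P = ln (det (g *\<^sub>R mat 1 + expW W P))"
definition "gn = C^2 * g^2 * (real CARD('n))^2 / 16"

lemma Pk_rec:
  assumes "1 \<le> k"
  shows "Pk (Suc k) = (\<lambda>z. (1 - C * g^2 * real CARD('n) / 8) * Pk k z
            + (C * g^2 * real CARD('n) / 8) * delta (fw_zt LinOpt LinEst g (Pk k)) z)"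
proof -
  obtain k' where "k = Suc k'" using assms by (cases k) auto
  thus ?thesis by (simp add: Let_def)
qed

lemma P1_valid: "is_fdist (Pk 1) Zsupp" "card (fsupp (Pk 1)) = 1"
proof -
  have "Pk 1 = delta (LinOpt (mat 1))" by (simp add: numeral_eq_Suc)
  thus "is_fdist (Pk 1) Zsupp" "card (fsupp (Pk 1)) = 1"
    by (simp_all add: fdist_delta LinOpt_in fsupp_delta)
qed

lemma invariant:
  assumes "1 \<le> k" and "\<forall>s. 1 \<le> s \<and> s < k \<longrightarrow> \<not> fw_stop LinOpt LinEst C g s"
  shows "is_fdist (Pk k) Zsupp \<and> card (fsupp (Pk k)) \<le> k
     \<and> Phi (Pk 1) + (real k - 1) * gn \<le> Phi (Pk k)
     \<and> (2 \<le> k \<longrightarrow> Phi (Pk 1) + (real k - 1) * gn < Phi (Pk k))"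
  using assms
proof (induction k rule: nat_induct_at_least)
  case base
  show ?case using P1_valid by simp
next
  case (Suc k)
  have ns: "\<not> fw_stop LinOpt LinEst C g k" using Suc.prems Suc.hyps by auto
  have IH: "is_fdist (Pk k) Zsupp \<and> card (fsupp (Pk k)) \<le> k
     \<and> Phi (Pk 1) + (real k - 1) * gn \<le> Phi (Pk k)
     \<and> (2 \<le> k \<longrightarrow> Phi (Pk 1) + (real k - 1) * gn < Phi (Pk k))"
    using Suc.IH Suc.prems by auto
  hence vP: "is_fdist (Pk k) Zsupp" by simp
  have nsP: "\<not> stopP LinOpt LinEst C g (Pk k)" using ns by (simp add: fw_stop_P)
  note G = gain[OF vP nsP]
  have eq: "Pk (Suc k) = (\<lambda>z. (1 - C * g^2 * real CARD('n) / 8) * Pk k z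
            + (C * g^2 * real CARD('n) / 8) * delta (fw_zt LinOpt LinEst g (Pk k)) z)"
    by (rule Pk_rec[OF Suc.hyps])
  have v': "is_fdist (Pk (Suc k)) Zsupp" using G(1) eq by simp
  have ph: "Phi (Pk k) + gn < Phi (Pk (Suc k))" using G(2) eq by (simp add: Phi_def gn_def)
  have fs: "finite (fsupp (Pk k))" using vP by (simp add: is_fdist_def)
  have "fsupp (Pk (Suc k)) \<subseteq> insert (fw_zt LinOpt LinEst g (Pk k)) (fsupp (Pk k))"
    unfolding eq by (rule fsupp_mix)
  hence "card (fsupp (Pk (Suc k))) \<le> card (insert (fw_zt LinOpt LinEst g (Pk k)) (fsupp (Pk k)))"
    using fs by (intro card_mono) auto
  also have "\<dots> \<le> Suc (card (fsupp (Pk k)))" by (simp add: card_insert_le_m1 fs card_insert_if)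
  finally have c': "card (fsupp (Pk (Suc k))) \<le> Suc k" using IH by simp
  have "Phi (Pk 1) + (real (Suc k) - 1) * gn < Phi (Pk (Suc k))"
    using IH ph by (simp add: algebra_simps)
  thus ?case using v' c' by simp
qed

lemma Phi_range:
  assumes "is_fdist P Zsupp"
  shows "real CARD('n) * ln g \<le> Phi P"
    "Phi P \<le> real CARD('n) * ln g + real CARD('n) * ln (1 + 1/g)"
  using logdet_range[OF E_facts(1)[OF assms] E_facts(2)[OF assms] E_facts(3)[OF assms] g0]
  by (simp_all add: Phi_def)

end

context fwset
begin

lemma main_result:
  defines "X \<equiv> 16 / (g^2 * C^2 * real CARD('n)) * ln (1 + 1 / g)"
  shows "\<exists>t::nat. 1 \<le> t
     \<and> real t \<le> real_of_int \<lceil>X\<rceil>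
     \<and> fw_stop LinOpt LinEst C g t
     \<and> (\<forall>s. 1 \<le> s \<and> s < t \<longrightarrow> \<not> fw_stop LinOpt LinEst C g s)
     \<and> is_fdist (Pk t) Zsupp
     \<and> card (fsupp (Pk t)) \<le> t
     \<and> (\<forall>z\<in>Zref. trace (matrix_inv (g *\<^sub>R mat 1 + expW W (Pk t)) ** W z)
           \<le> (1 + 3 * C / 2) * real CARD('n))"
proof -
  define d where "d = real CARD('n)"
  define N where "N = nat \<lceil>X\<rceil>"
  have d1: "d \<ge> 1" by (simp add: d_def)
  have lnpos: "ln (1 + 1/g) > 0" using g0 by (intro ln_gt_zero) simp
  have Xpos: "X > 0" unfolding X_def using g0 C1 lnpos by (intro mult_pos_pos divide_pos_pos) auto
  have "\<lceil>X\<rceil> \<ge> 1" using Xpos by (simp add: one_le_ceiling)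
  hence N1: "1 \<le> N" unfolding N_def by linarith
  have NX: "X \<le> real N" unfolding N_def using Xpos by linarith
  have Xgn: "X * gn = d * ln (1 + 1/g)"
    using g0 C1 d1 by (simp add: X_def gn_def d_def power2_eq_square field_simps)
  have ex: "\<exists>t. 1 \<le> t \<and> t \<le> N \<and> fw_stop LinOpt LinEst C g t"
  proof (rule ccontr)
    assume "\<not> ?thesis"
    hence ns: "\<forall>s. 1 \<le> s \<and> s < Suc N \<longrightarrow> \<not> fw_stop LinOpt LinEst C g s" by auto
    have I: "is_fdist (Pk (Suc N)) Zsupp \<and> card (fsupp (Pk (Suc N))) \<le> Suc N
     \<and> Phi (Pk 1) + (real (Suc N) - 1) * gn \<le> Phi (Pk (Suc N))
     \<and> (2 \<le> Suc N \<longrightarrow> Phi (Pk 1) + (real (Suc N) - 1) * gn < Phi (Pk (Suc N)))"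
      by (rule invariant) (use ns in auto)
    have lt: "Phi (Pk 1) + real N * gn < Phi (Pk (Suc N))" using I N1 by simp
    have gn0: "gn \<ge> 0" by (simp add: gn_def)
    have "X * gn \<le> real N * gn" using NX gn0 by (intro mult_right_mono) auto
    moreover have "Phi (Pk (Suc N)) \<le> d * ln g + d * ln (1 + 1/g)"
      using Phi_range(2) I by (simp add: d_def)
    moreover have "d * ln g \<le> Phi (Pk 1)" using Phi_range(1)[OF P1_valid(1)] by (simp add: d_def)
    ultimately show False using lt Xgn by linarith
  qed
  define t where "t = (LEAST t. 1 \<le> t \<and> fw_stop LinOpt LinEst C g t)"
  from ex obtain t0 where t0: "1 \<le> t0" "t0 \<le> N" "fw_stop LinOpt LinEst C g t0" by blast
  have tP: "1 \<le> t \<and> fw_stop LinOpt LinEst C g t"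
    unfolding t_def by (rule LeastI[of _ t0]) (use t0 in auto)
  have tle: "t \<le> t0" unfolding t_def by (rule Least_le) (use t0 in auto)
  have tmin: "\<forall>s. 1 \<le> s \<and> s < t \<longrightarrow> \<not> fw_stop LinOpt LinEst C g s"
    using not_less_Least[where P="\<lambda>t. 1 \<le> t \<and> fw_stop LinOpt LinEst C g t"] unfolding t_def by blast
  have I: "is_fdist (Pk t) Zsupp \<and> card (fsupp (Pk t)) \<le> t"
    using invariant[of t] tP tmin by blast
  have tN: "real t \<le> real_of_int \<lceil>X\<rceil>"
  proof -
    have "t \<le> N" using tle t0 by simp
    moreover have "real N = real_of_int \<lceil>X\<rceil>" unfolding N_def using Xpos by simp
    ultimately show ?thesis by simp
  qed
  have fb: "\<forall>z\<in>Zref. trace (matrix_inv (g *\<^sub>R mat 1 + expW W (Pk t)) ** W z)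
           \<le> (1 + 3 * C / 2) * real CARD('n)"
    using final_bound[of "Pk t"] I tP by (simp add: fw_stop_P)
  show ?thesis using tP tN tmin I fb by blast
qed

end


theorem mainTheorem2:
  fixes W :: "'z \<Rightarrow> real^'n^'n"
    and LinOpt :: "real^'n^'n \<Rightarrow> 'z"
    and LinEst :: "('z \<Rightarrow> real) \<Rightarrow> real^'n^'n"
    and Zref Zsupp :: "'z set"
    and C \<gamma> :: real
  assumes W_psd: "\<forall>z. psd (W z)"
    and W_norm: "\<forall>z. norm (W z) \<le> 1"
    and C: "1 < C" "C \<le> 2"
    and \<gamma>: "0 < \<gamma>" "\<gamma> < 1"
    and \<gamma>C: "\<gamma> * C < 5 / 2"
    and approx: "approx_assumption W LinOpt LinEst Zref Zsupp (C * \<gamma> / 5) (C * \<gamma>^2 / 10)"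
  shows "\<exists>t::nat. 1 \<le> t
     \<and> real t \<le> real_of_int \<lceil>16 / (\<gamma>^2 * C^2 * real CARD('n)) * ln (1 + 1 / \<gamma>)\<rceil>
     \<and> fw_stop LinOpt LinEst C \<gamma> t
     \<and> (\<forall>s. 1 \<le> s \<and> s < t \<longrightarrow> \<not> fw_stop LinOpt LinEst C \<gamma> s)
     \<and> is_fdist (fw_P LinOpt LinEst C \<gamma> t) Zsupp
     \<and> card (fsupp (fw_P LinOpt LinEst C \<gamma> t)) \<le> t
     \<and> (\<forall>z\<in>Zref. trace (matrix_inv (\<gamma> *\<^sub>R mat 1 + expW W (fw_P LinOpt LinEst C \<gamma> t)) ** W z)
           \<le> (1 + 3 * C / 2) * real CARD('n))"
proof -
  interpret fwset W LinOpt LinEst Zref Zsupp C \<gamma>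
    by (rule fwset.intro) (use W_psd W_norm C \<gamma> \<gamma>C approx in auto)
  show ?thesis by (rule main_result)
qed

end
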